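(* Let $\pi=(O,h)$, $O=(C,E,G)$, be the complete prefix unfolding of a net system $S$ and let $t_1,t_2$ be transitions of $S$. Consider the procedure CheckByCuts$(t_1,t_2)$: for each event $e_1\in E$ with $h(e_1)=t_1$, let $B_{prec}=e_1\bullet\cup\{c\in C\mid c\text{ co }e_1,\ h(c)\in\bullet t_2\}$, let $Q$ be the set of all cuts of $B_{prec}$ (subsets of $B_{prec}$ whose conditions are pairwise in co and which are maximal with this property w.r.t. inclusion within $B_{prec}$), and return true if some $X'\in Q$ satisfies $\bullet t_2\subseteq h(X')$; if no $e_1$ leads to a return of true, return false. Then CheckByCuts$(t_1,t_2)$ returns true if and only if $t_1<_{tar}t_2$.
   Context: Petri net $N=(P,T,F)$ with pre/post-sets $\bullet x$, $x\bullet$; markings, enabling (every input place marked) and firing $M'=M-\bullet t+t\bullet$ as usual; net system $S=(N,M_0)$. Transition adjacency relation: $t_1<_{tar}t_2$ iff there is a reachable marking $M_s$ of $S$ enabling $t_1$ such that after firing $t_1$ from $M_s$, $t_2$ is enabled. For nodes of an occurrence net: $x<y$ iff there is a directed path with at least one arc from $x$ to $y$; $x\#y$ iff there are a condition $s$ and paths $s\,t_1\cdots x$, $s\,t_2\cdots y$ with $t_1\neq t_2$; $x$ co $y$ iff none of $x<y,y<x,x\#y$ (this applies also between a condition and an event). The branching process $\pi=(O,h)$ ($h$ maps conditions to places and events to transitions), configurations, cut-off events w.r.t. an adequate order, and the complete prefix unfolding (greatest backward closed subnet of the unfolding containing no event after a cut-off event) are as in McMillan/Esparza unfolding theory. *)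

theory Defs
  imports Main
begin

definition preset :: "('a \<times> 'a) set \<Rightarrow> 'a \<Rightarrow> 'a set" where
  "preset F x = {y. (y, x) \<in> F}"

definition postset :: "('a \<times> 'a) set \<Rightarrow> 'a \<Rightarrow> 'a set" where
  "postset F x = {y. (x, y) \<in> F}"

definition net_system :: "'a set \<Rightarrow> 'a set \<Rightarrow> ('a \<times> 'a) set \<Rightarrow> ('a \<Rightarrow> nat) \<Rightarrow> bool" where
  "net_system P T F M0 \<longleftrightarrow>
     P \<inter> T = {} \<and> F \<subseteq> (P \<times> T) \<union> (T \<times> P) \<and> finite P \<and> finite T \<and>
     (\<forall>t\<in>T. preset F t \<noteq> {}) \<and> (\<forall>p. p \<notin> P \<longrightarrow> M0 p = 0)"

definition enabled :: "('a \<times> 'a) set \<Rightarrow> ('a \<Rightarrow> nat) \<Rightarrow> 'a \<Rightarrow> bool" where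
  "enabled F M t \<longleftrightarrow> (\<forall>p\<in>preset F t. 0 < M p)"

definition fire :: "('a \<times> 'a) set \<Rightarrow> ('a \<Rightarrow> nat) \<Rightarrow> 'a \<Rightarrow> ('a \<Rightarrow> nat)" where
  "fire F M t = (\<lambda>p. M p - (if p \<in> preset F t then 1 else 0)
                      + (if p \<in> postset F t then 1 else 0))"

inductive_set reach :: "'a set \<Rightarrow> ('a \<times> 'a) set \<Rightarrow> ('a \<Rightarrow> nat) \<Rightarrow> ('a \<Rightarrow> nat) set"
  for T F M0 where
  init: "M0 \<in> reach T F M0"
| step: "M \<in> reach T F M0 \<Longrightarrow> t \<in> T \<Longrightarrow> enabled F M t \<Longrightarrow> fire F M t \<in> reach T F M0"

definition tar :: "'a set \<Rightarrow> ('a \<times> 'a) set \<Rightarrow> ('a \<Rightarrow> nat) \<Rightarrow> 'a \<Rightarrow> 'a \<Rightarrow> bool" where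
  "tar T F M0 t1 t2 \<longleftrightarrow>
     t1 \<in> T \<and> t2 \<in> T \<and>
     (\<exists>Ms \<in> reach T F M0. enabled F Ms t1 \<and> enabled F (fire F Ms t1) t2)"

definition conflict :: "'n set \<Rightarrow> ('n \<times> 'n) set \<Rightarrow> 'n \<Rightarrow> 'n \<Rightarrow> bool" where
  "conflict C G x y \<longleftrightarrow>
     (\<exists>s\<in>C. \<exists>u1 u2. u1 \<noteq> u2 \<and> (s, u1) \<in> G \<and> (s, u2) \<in> G \<and>
                    (u1, x) \<in> G\<^sup>* \<and> (u2, y) \<in> G\<^sup>*)"

definition co :: "'n set \<Rightarrow> ('n \<times> 'n) set \<Rightarrow> 'n \<Rightarrow> 'n \<Rightarrow> bool" where
  "co C G x y \<longleftrightarrow> (x, y) \<notin> G\<^sup>+ \<and> (y, x) \<notin> G\<^sup>+ \<and> \<not> conflict C G x y"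

definition coset :: "'n set \<Rightarrow> ('n \<times> 'n) set \<Rightarrow> 'n set \<Rightarrow> bool" where
  "coset C G X \<longleftrightarrow> (\<forall>x\<in>X. \<forall>y\<in>X. x \<noteq> y \<longrightarrow> co C G x y)"

definition occurrence_net :: "'n set \<Rightarrow> 'n set \<Rightarrow> ('n \<times> 'n) set \<Rightarrow> bool" where
  "occurrence_net C E G \<longleftrightarrow>
     C \<inter> E = {} \<and> G \<subseteq> (C \<times> E) \<union> (E \<times> C) \<and>
     (\<forall>c\<in>C. \<forall>e1 e2. (e1, c) \<in> G \<and> (e2, c) \<in> G \<longrightarrow> e1 = e2) \<and>
     (\<forall>x. (x, x) \<notin> G\<^sup>+) \<and>
     (\<forall>x\<in>C \<union> E. finite {y. (y, x) \<in> G\<^sup>+}) \<and>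
     (\<forall>x\<in>C \<union> E. \<not> conflict C G x x)"

definition min_conds :: "'n set \<Rightarrow> ('n \<times> 'n) set \<Rightarrow> 'n set" where
  "min_conds C G = {c\<in>C. preset G c = {}}"

definition branching_process ::
  "'a set \<Rightarrow> 'a set \<Rightarrow> ('a \<times> 'a) set \<Rightarrow> ('a \<Rightarrow> nat) \<Rightarrow>
   'n set \<Rightarrow> 'n set \<Rightarrow> ('n \<times> 'n) set \<Rightarrow> ('n \<Rightarrow> 'a) \<Rightarrow> bool" where
  "branching_process P T F M0 C E G h \<longleftrightarrow>
     occurrence_net C E G \<and> h ` C \<subseteq> P \<and> h ` E \<subseteq> T \<and>
     (\<forall>e\<in>E. bij_betw h (preset G e) (preset F (h e)) \<and>
             bij_betw h (postset G e) (postset F (h e))) \<and>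
     finite (min_conds C G) \<and>
     (\<forall>p. card {c \<in> min_conds C G. h c = p} = M0 p) \<and>
     (\<forall>e1\<in>E. \<forall>e2\<in>E. preset G e1 = preset G e2 \<and> h e1 = h e2 \<longrightarrow> e1 = e2)"

definition is_unfolding ::
  "'a set \<Rightarrow> 'a set \<Rightarrow> ('a \<times> 'a) set \<Rightarrow> ('a \<Rightarrow> nat) \<Rightarrow>
   'n set \<Rightarrow> 'n set \<Rightarrow> ('n \<times> 'n) set \<Rightarrow> ('n \<Rightarrow> 'a) \<Rightarrow> bool" where
  "is_unfolding P T F M0 C E G h \<longleftrightarrow>
     branching_process P T F M0 C E G h \<and>
     (\<forall>B t. B \<subseteq> C \<and> coset C G B \<and> t \<in> T \<and> bij_betw h B (preset F t) \<longrightarrow>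
            (\<exists>e\<in>E. preset G e = B \<and> h e = t))"

definition configuration :: "'n set \<Rightarrow> 'n set \<Rightarrow> ('n \<times> 'n) set \<Rightarrow> 'n set \<Rightarrow> bool" where
  "configuration C E G X \<longleftrightarrow>
     X \<subseteq> E \<and> (\<forall>e\<in>X. \<forall>e'\<in>E. (e', e) \<in> G\<^sup>+ \<longrightarrow> e' \<in> X) \<and>
     (\<forall>e\<in>X. \<forall>e'\<in>X. \<not> conflict C G e e')"

definition local_config :: "'n set \<Rightarrow> ('n \<times> 'n) set \<Rightarrow> 'n \<Rightarrow> 'n set" where
  "local_config E G e = {e'\<in>E. (e', e) \<in> G\<^sup>*}"

definition cut :: "'n set \<Rightarrow> ('n \<times> 'n) set \<Rightarrow> 'n set \<Rightarrow> 'n set" where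
  "cut C G X = (min_conds C G \<union> (\<Union>e\<in>X. postset G e)) - (\<Union>e\<in>X. preset G e)"

definition mark :: "'n set \<Rightarrow> ('n \<times> 'n) set \<Rightarrow> ('n \<Rightarrow> 'a) \<Rightarrow> 'n set \<Rightarrow> ('a \<Rightarrow> nat)" where
  "mark C G h X = (\<lambda>p. card {c \<in> cut C G X. h c = p})"

definition future :: "'n set \<Rightarrow> 'n set \<Rightarrow> ('n \<times> 'n) set \<Rightarrow> 'n set \<Rightarrow> 'n set" where
  "future C E G X =
     {x \<in> C \<union> E. x \<notin> X \<and> x \<notin> (\<Union>e\<in>X. preset G e) \<and> (\<forall>e\<in>X. \<not> conflict C G x e)}"

definition future_iso ::
  "'n set \<Rightarrow> 'n set \<Rightarrow> ('n \<times> 'n) set \<Rightarrow> ('n \<Rightarrow> 'a) \<Rightarrow> 'n set \<Rightarrow> 'n set \<Rightarrow> ('n \<Rightarrow> 'n) \<Rightarrow> bool" where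
  "future_iso C E G h X1 X2 I \<longleftrightarrow>
     bij_betw I (future C E G X1) (future C E G X2) \<and>
     (\<forall>x\<in>future C E G X1. (x \<in> E \<longleftrightarrow> I x \<in> E) \<and> h (I x) = h x) \<and>
     (\<forall>x\<in>future C E G X1. \<forall>y\<in>future C E G X1. (x, y) \<in> G \<longleftrightarrow> (I x, I y) \<in> G)"

definition adequate_order ::
  "'n set \<Rightarrow> 'n set \<Rightarrow> ('n \<times> 'n) set \<Rightarrow> ('n \<Rightarrow> 'a) \<Rightarrow> ('n set \<Rightarrow> 'n set \<Rightarrow> bool) \<Rightarrow> bool" where
  "adequate_order C E G h lt \<longleftrightarrow>
     (let fc = (\<lambda>X. configuration C E G X \<and> finite X) in
       (\<forall>X. fc X \<longrightarrow> \<not> lt X X) \<and>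
       (\<forall>X Y Z. fc X \<and> fc Y \<and> fc Z \<and> lt X Y \<and> lt Y Z \<longrightarrow> lt X Z) \<and>
       wfp (\<lambda>X Y. fc X \<and> fc Y \<and> lt X Y) \<and>
       (\<forall>X Y. fc X \<and> fc Y \<and> X \<subset> Y \<longrightarrow> lt X Y) \<and>
       (\<forall>X1 X2 I Ex. fc X1 \<and> fc X2 \<and> lt X1 X2 \<and> mark C G h X1 = mark C G h X2 \<and>
          future_iso C E G h X1 X2 I \<and> Ex \<inter> X1 = {} \<and> fc (X1 \<union> Ex) \<longrightarrow>
          lt (X1 \<union> Ex) (X2 \<union> I ` Ex)))"

definition cutoff ::
  "'n set \<Rightarrow> 'n set \<Rightarrow> ('n \<times> 'n) set \<Rightarrow> ('n \<Rightarrow> 'a) \<Rightarrow> ('n set \<Rightarrow> 'n set \<Rightarrow> bool) \<Rightarrow> 'n \<Rightarrow> bool" where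
  "cutoff C E G h lt e \<longleftrightarrow>
     e \<in> E \<and> (\<exists>e'\<in>E. mark C G h (local_config E G e') = mark C G h (local_config E G e) \<and>
                      lt (local_config E G e') (local_config E G e))"

definition complete_prefix ::
  "'a set \<Rightarrow> 'a set \<Rightarrow> ('a \<times> 'a) set \<Rightarrow> ('a \<Rightarrow> nat) \<Rightarrow>
   'n set \<Rightarrow> 'n set \<Rightarrow> ('n \<times> 'n) set \<Rightarrow> ('n \<Rightarrow> 'a) \<Rightarrow> bool" where
  "complete_prefix P T F M0 C E G h \<longleftrightarrow>
     (\<exists>CU EU GU lt. is_unfolding P T F M0 CU EU GU h \<and> adequate_order CU EU GU h lt \<and>
        E = {e \<in> EU. \<not> (\<exists>e'. cutoff CU EU GU h lt e' \<and> (e', e) \<in> GU\<^sup>+)} \<and>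
        C = {c \<in> CU. \<forall>e. (e, c) \<in> GU \<longrightarrow> e \<in> E} \<and>
        G = GU \<inter> ((C \<union> E) \<times> (C \<union> E)))"

definition B_prec :: "('a \<times> 'a) set \<Rightarrow> 'n set \<Rightarrow> ('n \<times> 'n) set \<Rightarrow> ('n \<Rightarrow> 'a) \<Rightarrow> 'n \<Rightarrow> 'a \<Rightarrow> 'n set" where
  "B_prec F C G h e1 t2 = postset G e1 \<union> {c\<in>C. co C G c e1 \<and> h c \<in> preset F t2}"

definition cuts_of :: "'n set \<Rightarrow> ('n \<times> 'n) set \<Rightarrow> 'n set \<Rightarrow> 'n set set" where
  "cuts_of C G B = {X. X \<subseteq> B \<and> coset C G X \<and> (\<forall>Y. X \<subset> Y \<and> Y \<subseteq> B \<longrightarrow> \<not> coset C G Y)}"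

definition check_by_cuts ::
  "('a \<times> 'a) set \<Rightarrow> 'n set \<Rightarrow> 'n set \<Rightarrow> ('n \<times> 'n) set \<Rightarrow> ('n \<Rightarrow> 'a) \<Rightarrow> 'a \<Rightarrow> 'a \<Rightarrow> bool" where
  "check_by_cuts F C E G h t1 t2 \<longleftrightarrow>
     (\<exists>e1\<in>E. h e1 = t1 \<and>
        (\<exists>X'\<in>cuts_of C G (B_prec F C G h e1 t2). preset F t2 \<subseteq> h ` X'))"

end

theory Submission
  imports Defs
begin


lemma conflict_sym: "conflict C G x y \<Longrightarrow> conflict C G y x"
proof -
  assume "conflict C G x y"
  then obtain s u1 u2 where "s \<in> C" "u1 \<noteq> u2" "(s, u1) \<in> G" "(s, u2) \<in> G" "(u1, x) \<in> G\<^sup>*" "(u2, y) \<in> G\<^sup>*"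
    unfolding conflict_def by blast
  then show ?thesis unfolding conflict_def by (intro bexI[of _ s] exI[of _ u2] exI[of _ u1]) auto
qed

lemma conflict_mono_r: "conflict C G x y \<Longrightarrow> (y, z) \<in> G\<^sup>* \<Longrightarrow> conflict C G x z"
  unfolding conflict_def by (meson rtrancl_trans)

lemma conflict_mono_l: "conflict C G x y \<Longrightarrow> (x, z) \<in> G\<^sup>* \<Longrightarrow> conflict C G z y"
  unfolding conflict_def by (meson rtrancl_trans)

locale unf =
  fixes P T :: "'a set" and F :: "('a \<times> 'a) set" and M0 :: "'a \<Rightarrow> nat"
    and C E :: "'n set" and G :: "('n \<times> 'n) set" and h :: "'n \<Rightarrow> 'a"
  assumes ns: "net_system P T F M0" and unf: "is_unfolding P T F M0 C E G h"
begin

abbreviation pre where "pre x \<equiv> preset G x"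
abbreviation post where "post x \<equiv> postset G x"
abbreviation cfg where "cfg X \<equiv> configuration C E G X \<and> finite X"

lemma bp: "branching_process P T F M0 C E G h" using unf by (simp add: is_unfolding_def)
lemma occ: "occurrence_net C E G" using bp by (simp add: branching_process_def)

lemma CE_disj: "C \<inter> E = {}" using occ by (simp add: occurrence_net_def)
lemma G_sub: "G \<subseteq> (C \<times> E) \<union> (E \<times> C)" using occ by (simp add: occurrence_net_def)
lemma uniq_pre: "c \<in> C \<Longrightarrow> (e1, c) \<in> G \<Longrightarrow> (e2, c) \<in> G \<Longrightarrow> e1 = e2"
  using occ by (simp add: occurrence_net_def)
lemma acyc: "(x, x) \<notin> G\<^sup>+" using occ by (simp add: occurrence_net_def)
lemma fin_pred: "x \<in> C \<union> E \<Longrightarrow> finite {y. (y, x) \<in> G\<^sup>+}" using occ by (simp add: occurrence_net_def)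
lemma no_self_conf: "x \<in> C \<union> E \<Longrightarrow> \<not> conflict C G x x" using occ by (simp add: occurrence_net_def)
lemma hC: "h ` C \<subseteq> P" using bp by (simp add: branching_process_def)
lemma hE: "h ` E \<subseteq> T" using bp by (simp add: branching_process_def)
lemma bij_pre: "e \<in> E \<Longrightarrow> bij_betw h (pre e) (preset F (h e))" using bp by (simp add: branching_process_def)
lemma bij_post: "e \<in> E \<Longrightarrow> bij_betw h (post e) (postset F (h e))" using bp by (simp add: branching_process_def)
lemma fin_min: "finite (min_conds C G)" using bp by (simp add: branching_process_def)
lemma card_min: "card {c \<in> min_conds C G. h c = p} = M0 p" using bp by (simp add: branching_process_def)
lemma uniq_ev: "e1 \<in> E \<Longrightarrow> e2 \<in> E \<Longrightarrow> pre e1 = pre e2 \<Longrightarrow> h e1 = h e2 \<Longrightarrow> e1 = e2"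
  using bp by (simp add: branching_process_def)
lemma ext: "B \<subseteq> C \<Longrightarrow> coset C G B \<Longrightarrow> t \<in> T \<Longrightarrow> bij_betw h B (preset F t) \<Longrightarrow> \<exists>e\<in>E. pre e = B \<and> h e = t"
  using unf by (simp add: is_unfolding_def)

lemma finP: "finite P" using ns by (simp add: net_system_def)
lemma FPT: "F \<subseteq> (P \<times> T) \<union> (T \<times> P)" using ns by (simp add: net_system_def)
lemma preF_ne: "t \<in> T \<Longrightarrow> preset F t \<noteq> {}" using ns by (simp add: net_system_def)
lemma PT_disj: "P \<inter> T = {}" using ns by (simp add: net_system_def)

lemma preF_fin: "t \<in> T \<Longrightarrow> finite (preset F t)"
proof -
  assume "t \<in> T"
  have "preset F t \<subseteq> P" using FPT PT_disj \<open>t \<in> T\<close> unfolding preset_def by auto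
  then show ?thesis using finP finite_subset by blast
qed
lemma postF_fin: "t \<in> T \<Longrightarrow> finite (postset F t)"
proof -
  assume "t \<in> T"
  have "postset F t \<subseteq> P" using FPT PT_disj \<open>t \<in> T\<close> unfolding postset_def by auto
  then show ?thesis using finP finite_subset by blast
qed

lemma pre_fin: "e \<in> E \<Longrightarrow> finite (pre e)"
proof -
  assume e: "e \<in> E"
  then have "h e \<in> T" using hE by blast
  then show ?thesis using bij_betw_finite[OF bij_pre[OF e]] preF_fin by simp
qed
lemma post_fin: "e \<in> E \<Longrightarrow> finite (post e)"
proof -
  assume e: "e \<in> E"
  then have "h e \<in> T" using hE by blast
  then show ?thesis using bij_betw_finite[OF bij_post[OF e]] postF_fin by simp
qed
lemma pre_ne: "e \<in> E \<Longrightarrow> pre e \<noteq> {}"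
proof
  assume "e \<in> E" "pre e = {}"
  then have "preset F (h e) = {}" using bij_pre[of e] by (simp add: bij_betw_def)
  moreover have "h e \<in> T" using hE \<open>e \<in> E\<close> by blast
  ultimately show False using preF_ne by blast
qed

lemma G_cases: "(x, y) \<in> G \<Longrightarrow> (x \<in> C \<and> y \<in> E) \<or> (x \<in> E \<and> y \<in> C)"
  using G_sub by blast
lemma G_C: "(x, y) \<in> G \<Longrightarrow> x \<in> C \<Longrightarrow> y \<in> E" using G_sub CE_disj by blast
lemma G_E: "(x, y) \<in> G \<Longrightarrow> x \<in> E \<Longrightarrow> y \<in> C" using G_sub CE_disj by blast
lemma G_C2: "(x, y) \<in> G \<Longrightarrow> y \<in> C \<Longrightarrow> x \<in> E" using G_sub CE_disj by blast
lemma G_E2: "(x, y) \<in> G \<Longrightarrow> y \<in> E \<Longrightarrow> x \<in> C" using G_sub CE_disj by blast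
lemma post_C: "e \<in> E \<Longrightarrow> post e \<subseteq> C" using G_E unfolding postset_def by blast
lemma pre_C: "e \<in> E \<Longrightarrow> pre e \<subseteq> C" using G_E2 unfolding preset_def by blast

lemma trancl_node: "(x, y) \<in> G\<^sup>+ \<Longrightarrow> x \<in> C \<union> E \<and> y \<in> C \<union> E"
proof -
  assume a: "(x, y) \<in> G\<^sup>+"
  obtain z where "(x, z) \<in> G" using a by (meson tranclD)
  moreover obtain w where "(w, y) \<in> G" using a by (meson tranclD2)
  ultimately show ?thesis using G_sub by blast
qed

lemma conflict_node: "conflict C G x y \<Longrightarrow> x \<in> C \<union> E"
proof -
  assume "conflict C G x y"
  then obtain s u1 where "s \<in> C" "(s, u1) \<in> G" "(u1, x) \<in> G\<^sup>*" unfolding conflict_def by blast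
  then have "(s, x) \<in> G\<^sup>+" by (meson rtrancl_into_trancl2)
  then show ?thesis using trancl_node by blast
qed

lemma ev_to_cond: "(u, b) \<in> G\<^sup>* \<Longrightarrow> u \<in> E \<Longrightarrow> b \<in> C \<Longrightarrow> \<exists>w. (w, b) \<in> G \<and> (u, w) \<in> G\<^sup>*"
proof -
  assume a: "(u, b) \<in> G\<^sup>*" "u \<in> E" "b \<in> C"
  then have "u \<noteq> b" using CE_disj by blast
  then have "(u, b) \<in> G\<^sup>+" using a rtrancl_eq_or_trancl by metis
  then show ?thesis by (meson tranclD2 trancl_into_rtrancl)
qed

lemma conflict_cond_pre: "conflict C G b y \<Longrightarrow> b \<in> C \<Longrightarrow> (w, b) \<in> G \<Longrightarrow> conflict C G w y"
proof -
  assume c: "conflict C G b y" and b: "b \<in> C" and w: "(w, b) \<in> G"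
  then obtain s u1 u2 where s: "s \<in> C" "u1 \<noteq> u2" "(s, u1) \<in> G" "(s, u2) \<in> G" "(u1, b) \<in> G\<^sup>*" "(u2, y) \<in> G\<^sup>*"
    unfolding conflict_def by blast
  have "u1 \<in> E" using G_C s by blast
  then obtain w' where "(w', b) \<in> G" "(u1, w') \<in> G\<^sup>*" using ev_to_cond s b by blast
  then have "w' = w" using uniq_pre b w by blast
  then show ?thesis unfolding conflict_def using s \<open>(u1, w') \<in> G\<^sup>*\<close> by blast
qed

lemma conflict_event_pre:
  assumes "conflict C G x y" "x \<in> E"
  shows "(\<exists>b \<in> pre x. conflict C G b y) \<or> (\<exists>b\<in>pre x. \<exists>u. u \<noteq> x \<and> (b, u) \<in> G \<and> (u, y) \<in> G\<^sup>*)"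
proof -
  obtain s u1 u2 where s: "s \<in> C" "u1 \<noteq> u2" "(s, u1) \<in> G" "(s, u2) \<in> G" "(u1, x) \<in> G\<^sup>*" "(u2, y) \<in> G\<^sup>*"
    using assms unfolding conflict_def by blast
  show ?thesis
  proof (cases "u1 = x")
    case True
    then have "s \<in> pre x" using s by (simp add: preset_def)
    moreover have "u2 \<noteq> x" using s True by simp
    ultimately show ?thesis using s by (intro disjI2 bexI[of _ s] exI[of _ u2]) auto
  next
    case False
    then have "(u1, x) \<in> G\<^sup>+" using s rtrancl_eq_or_trancl by metis
    then obtain b where "(u1, b) \<in> G\<^sup>*" "(b, x) \<in> G" by (meson tranclD2)
    then have "conflict C G b y" unfolding conflict_def using s by blast
    then show ?thesis using \<open>(b, x) \<in> G\<close> unfolding preset_def by blast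
  qed
qed

end


context unf begin

lemma cut_mem: "b \<in> cut C G X \<longleftrightarrow> (b \<in> min_conds C G \<or> (\<exists>e\<in>X. (e, b) \<in> G)) \<and> (\<forall>e\<in>X. (b, e) \<notin> G)"
  unfolding cut_def preset_def postset_def by blast

lemma min_conds_mem: "b \<in> min_conds C G \<longleftrightarrow> b \<in> C \<and> (\<forall>w. (w, b) \<notin> G)"
  unfolding min_conds_def preset_def by blast

lemma cfg_sub: "configuration C E G X \<Longrightarrow> X \<subseteq> E" by (simp add: configuration_def)
lemma cfg_closed: "configuration C E G X \<Longrightarrow> e \<in> X \<Longrightarrow> (u, e) \<in> G\<^sup>* \<Longrightarrow> u \<in> E \<Longrightarrow> u \<in> X"
proof -
  assume a: "configuration C E G X" "e \<in> X" "(u, e) \<in> G\<^sup>*" "u \<in> E"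
  show "u \<in> X"
  proof (cases "u = e")
    case True then show ?thesis using a by simp
  next
    case False
    then have "(u, e) \<in> G\<^sup>+" using a(3) by (simp add: rtrancl_eq_or_trancl)
    then show ?thesis using a unfolding configuration_def by blast
  qed
qed
lemma cfg_nc: "configuration C E G X \<Longrightarrow> e \<in> X \<Longrightarrow> e' \<in> X \<Longrightarrow> \<not> conflict C G e e'"
  unfolding configuration_def by blast
lemma cfg_nc2: "configuration C E G X \<Longrightarrow> u1 \<in> X \<Longrightarrow> u2 \<in> X \<Longrightarrow> s \<in> C \<Longrightarrow> u1 \<noteq> u2 \<Longrightarrow> (s, u1) \<in> G \<Longrightarrow> (s, u2) \<in> G \<Longrightarrow> False"
proof -
  assume a: "configuration C E G X" "u1 \<in> X" "u2 \<in> X" "s \<in> C" "u1 \<noteq> u2" "(s, u1) \<in> G" "(s, u2) \<in> G"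
  then have "conflict C G u1 u2" unfolding conflict_def by blast
  then show False using cfg_nc a by blast
qed

lemma cut_sub: "X \<subseteq> E \<Longrightarrow> cut C G X \<subseteq> C"
proof
  fix b assume "X \<subseteq> E" "b \<in> cut C G X"
  then show "b \<in> C" unfolding cut_mem min_conds_mem using G_E by blast
qed

lemma cut_fin: "cfg X \<Longrightarrow> finite (cut C G X)"
proof -
  assume a: "cfg X"
  have "cut C G X \<subseteq> min_conds C G \<union> (\<Union>e\<in>X. post e)" unfolding cut_def by blast
  moreover have "finite (\<Union>e\<in>X. post e)" using a cfg_sub post_fin by blast
  ultimately show ?thesis using fin_min finite_subset by blast
qed

lemma cut_pre: "configuration C E G X \<Longrightarrow> b \<in> cut C G X \<Longrightarrow> (w, b) \<in> G \<Longrightarrow> w \<in> X"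
proof -
  assume a: "configuration C E G X" "b \<in> cut C G X" "(w, b) \<in> G"
  then obtain e where "e \<in> X" "(e, b) \<in> G" unfolding cut_mem min_conds_mem by blast
  moreover have "b \<in> C" using a cut_sub cfg_sub by blast
  ultimately show ?thesis using uniq_pre a by blast
qed

lemma cut_below_in: "configuration C E G X \<Longrightarrow> b \<in> cut C G X \<Longrightarrow> (u, b) \<in> G\<^sup>* \<Longrightarrow> u \<in> E \<Longrightarrow> u \<in> X"
proof -
  assume a: "configuration C E G X" "b \<in> cut C G X" "(u, b) \<in> G\<^sup>*" "u \<in> E"
  have "b \<in> C" using a cut_sub cfg_sub by blast
  then obtain w where "(w, b) \<in> G" "(u, w) \<in> G\<^sup>*" using ev_to_cond a by blast
  then show ?thesis using cut_pre cfg_closed a by blast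
qed

lemma cut_not_below: "configuration C E G X \<Longrightarrow> b \<in> cut C G X \<Longrightarrow> e \<in> X \<Longrightarrow> (b, e) \<notin> G\<^sup>+"
proof
  assume a: "configuration C E G X" "b \<in> cut C G X" "e \<in> X" "(b, e) \<in> G\<^sup>+"
  then obtain u where u: "(b, u) \<in> G" "(u, e) \<in> G\<^sup>*" by (meson tranclD)
  have "b \<in> C" using a cut_sub cfg_sub by blast
  then have "u \<in> E" using G_C u by blast
  then have "u \<in> X" using cfg_closed a u by blast
  then show False using a u unfolding cut_mem by blast
qed

lemma cut_noconf: "configuration C E G X \<Longrightarrow> b \<in> cut C G X \<Longrightarrow> e \<in> X \<Longrightarrow> \<not> conflict C G b e"
proof
  assume a: "configuration C E G X" "b \<in> cut C G X" "e \<in> X" "conflict C G b e"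
  then obtain s u1 u2 where s: "s \<in> C" "u1 \<noteq> u2" "(s, u1) \<in> G" "(s, u2) \<in> G" "(u1, b) \<in> G\<^sup>*" "(u2, e) \<in> G\<^sup>*"
    unfolding conflict_def by blast
  have "u1 \<in> E" "u2 \<in> E" using G_C s by auto
  then have "u1 \<in> X" "u2 \<in> X" using cut_below_in cfg_closed a s by auto
  then show False using cfg_nc2 a s by blast
qed

lemma cut_noconf': "configuration C E G X \<Longrightarrow> b \<in> cut C G X \<Longrightarrow> e \<in> X \<Longrightarrow> \<not> conflict C G e b"
  using cut_noconf[of X b e] conflict_sym[of C G e b] by blast

lemma cut_coset: "configuration C E G X \<Longrightarrow> coset C G (cut C G X)"
  unfolding coset_def co_def
proof (intro ballI impI conjI)
  fix b1 b2 assume a: "configuration C E G X" "b1 \<in> cut C G X" "b2 \<in> cut C G X" "b1 \<noteq> b2"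
  have bC: "b1 \<in> C" "b2 \<in> C" using a cut_sub cfg_sub by auto
  show "(b1, b2) \<notin> G\<^sup>+"
  proof
    assume "(b1, b2) \<in> G\<^sup>+"
    then obtain u where u: "(b1, u) \<in> G" "(u, b2) \<in> G\<^sup>*" by (meson tranclD)
    then have "u \<in> E" using G_C bC by blast
    then have "u \<in> X" using cut_below_in a u by blast
    then show False using a u unfolding cut_mem by blast
  qed
  show "(b2, b1) \<notin> G\<^sup>+"
  proof
    assume "(b2, b1) \<in> G\<^sup>+"
    then obtain u where u: "(b2, u) \<in> G" "(u, b1) \<in> G\<^sup>*" by (meson tranclD)
    then have "u \<in> E" using G_C bC by blast
    then have "u \<in> X" using cut_below_in a u by blast
    then show False using a u unfolding cut_mem by blast
  qed
  show "\<not> conflict C G b1 b2"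
  proof
    assume "conflict C G b1 b2"
    then obtain s u1 u2 where s: "s \<in> C" "u1 \<noteq> u2" "(s, u1) \<in> G" "(s, u2) \<in> G" "(u1, b1) \<in> G\<^sup>*" "(u2, b2) \<in> G\<^sup>*"
      unfolding conflict_def by blast
    have "u1 \<in> E" "u2 \<in> E" using G_C s by auto
    then have "u1 \<in> X" "u2 \<in> X" using cut_below_in a s by auto
    then show False using cfg_nc2 a s by blast
  qed
qed

lemma coset_subset: "coset C G X \<Longrightarrow> Y \<subseteq> X \<Longrightarrow> coset C G Y"
  unfolding coset_def by blast

lemma card_fiber_bij: "bij_betw h A B \<Longrightarrow> card {c\<in>A. h c = p} = (if p \<in> B then 1 else 0)"
proof -
  assume b: "bij_betw h A B"
  show ?thesis
  proof (cases "p \<in> B")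
    case True
    then obtain c where c: "c \<in> A" "h c = p" using b by (metis bij_betw_def imageE)
    then have "{c\<in>A. h c = p} = {c}" using b c unfolding bij_betw_def inj_on_def by blast
    then show ?thesis using True by simp
  next
    case False
    then have "{c\<in>A. h c = p} = {}" using b unfolding bij_betw_def by blast
    then have "card {c\<in>A. h c = p} = 0" by (metis card.empty)
    then show ?thesis using False by simp
  qed
qed

end

context unf begin
lemma extend:
  assumes Y: "cfg Y" and e: "e \<in> E" and pe: "pre e \<subseteq> cut C G Y"
  shows "e \<notin> Y" "cfg (insert e Y)" "cut C G (insert e Y) = (cut C G Y - pre e) \<union> post e"
    "post e \<inter> cut C G Y = {}" "mark C G h (insert e Y) = fire F (mark C G h Y) (h e)"
proof -
  have Yc: "configuration C E G Y" using Y by simp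
  obtain b0 where b0: "b0 \<in> pre e" using pre_ne e by blast
  show eY: "e \<notin> Y"
  proof
    assume eY: "e \<in> Y"
    have "b0 \<in> cut C G Y" using b0 pe by blast
    then have "(b0, e) \<notin> G" using eY cut_mem by blast
    then show False using b0 by (simp add: preset_def)
  qed
  have closed: "\<forall>x\<in>insert e Y. \<forall>e'\<in>E. (e', x) \<in> G\<^sup>+ \<longrightarrow> e' \<in> insert e Y"
  proof (intro ballI impI)
    fix x e' assume x: "x \<in> insert e Y" and e': "e' \<in> E" "(e', x) \<in> G\<^sup>+"
    show "e' \<in> insert e Y"
    proof (cases "x = e")
      case True
      then obtain b where b: "(e', b) \<in> G\<^sup>*" "(b, e) \<in> G" using e' by (meson tranclD2)
      then have "b \<in> pre e" unfolding preset_def by simp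
      then have "e' \<in> Y" using cut_below_in Yc pe b e' by blast
      then show ?thesis by simp
    next
      case False
      then have "x \<in> Y" using x by simp
      then show ?thesis using Yc e' unfolding configuration_def by blast
    qed
  qed
  have nc: "\<forall>x\<in>insert e Y. \<forall>y\<in>insert e Y. \<not> conflict C G x y"
  proof -
    have ne: "\<not> conflict C G e y" if "y \<in> Y" for y
    proof
      assume c: "conflict C G e y"
      from conflict_event_pre[OF c e] show False
      proof
        assume "\<exists>b\<in>pre e. conflict C G b y"
        then show False using cut_noconf Yc pe that by blast
      next
        assume "\<exists>b\<in>pre e. \<exists>u. u \<noteq> e \<and> (b, u) \<in> G \<and> (u, y) \<in> G\<^sup>*"
        then obtain b u where bu: "b \<in> pre e" "(b, u) \<in> G" "(u, y) \<in> G\<^sup>*" by blast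
        have "b \<in> C" using pre_C e bu by blast
        then have "u \<in> E" using G_C bu by blast
        then have "u \<in> Y" using cfg_closed Yc that bu by blast
        moreover have "b \<in> cut C G Y" using pe bu by blast
        ultimately show False using bu cut_mem by blast
      qed
    qed
    have "\<not> conflict C G e e" using no_self_conf e by blast
    moreover have "\<not> conflict C G y e" if "y \<in> Y" for y using ne[OF that] conflict_sym[of C G y e] by blast
    ultimately show ?thesis using ne Yc unfolding configuration_def by blast
  qed
  show "cfg (insert e Y)" using closed nc Y e unfolding configuration_def by blast
  have pe_post: "post e \<inter> (\<Union>y\<in>insert e Y. pre y) = {}"
  proof (rule ccontr)
    assume "post e \<inter> (\<Union>y\<in>insert e Y. pre y) \<noteq> {}"
    then obtain b y where b: "(e, b) \<in> G" "(b, y) \<in> G" "y \<in> insert e Y" unfolding preset_def postset_def by blast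
    then have "(e, y) \<in> G\<^sup>+" by auto
    show False
    proof (cases "y = e")
      case True
      then show False using \<open>(e, y) \<in> G\<^sup>+\<close> acyc by blast
    next
      case False
      then have "y \<in> Y" using b by blast
      then have "e \<in> Y" using Yc e \<open>(e, y) \<in> G\<^sup>+\<close> unfolding configuration_def by blast
      then show False using eY by blast
    qed
  qed
  show cut_eq: "cut C G (insert e Y) = (cut C G Y - pre e) \<union> post e"
    using pe_post unfolding cut_def by blast
  show disj: "post e \<inter> cut C G Y = {}"
  proof (rule ccontr)
    assume "post e \<inter> cut C G Y \<noteq> {}"
    then obtain b where b: "(e, b) \<in> G" "b \<in> cut C G Y" unfolding postset_def by blast
    then have "e \<in> Y" using cut_pre Yc by blast
    then show False using eY by simp
  qed
  show "mark C G h (insert e Y) = fire F (mark C G h Y) (h e)"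
  proof
    fix p
    have fc: "finite (cut C G Y)" using cut_fin Y by blast
    have fp: "finite (post e)" using post_fin e by blast
    have "{c \<in> cut C G (insert e Y). h c = p} = {c \<in> cut C G Y - pre e. h c = p} \<union> {c\<in>post e. h c = p}"
      using cut_eq by blast
    moreover have "card ({c \<in> cut C G Y - pre e. h c = p} \<union> {c\<in>post e. h c = p}) = card {c \<in> cut C G Y - pre e. h c = p} + card {c\<in>post e. h c = p}"
      by (rule card_Un_disjoint) (use disj fc fp in auto)
    ultimately have "card {c \<in> cut C G (insert e Y). h c = p} = card {c \<in> cut C G Y - pre e. h c = p} + card {c\<in>post e. h c = p}"
      by simp
    moreover have "{c \<in> cut C G Y - pre e. h c = p} = {c \<in> cut C G Y. h c = p} - {c\<in>pre e. h c = p}" by blast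
    moreover have "card ({c \<in> cut C G Y. h c = p} - {c\<in>pre e. h c = p}) = card {c \<in> cut C G Y. h c = p} - card {c\<in>pre e. h c = p}"
      using pe fc pre_fin[OF e] by (intro card_Diff_subset) auto
    moreover have "card {c\<in>pre e. h c = p} = (if p \<in> preset F (h e) then 1 else 0)" using card_fiber_bij bij_pre e by blast
    moreover have "card {c\<in>post e. h c = p} = (if p \<in> postset F (h e) then 1 else 0)" using card_fiber_bij bij_post e by blast
    ultimately show "mark C G h (insert e Y) p = fire F (mark C G h Y) (h e) p"
      unfolding mark_def fire_def by simp
  qed
qed

end

context unf begin
lemma remove_max:
  assumes W: "cfg W" and e: "e \<in> W" and mx: "\<forall>e'\<in>W. (e, e') \<notin> G\<^sup>+"
  shows "cfg (W - {e})" "pre e \<subseteq> cut C G (W - {e})"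
proof -
  have Wc: "configuration C E G W" using W by simp
  have eE: "e \<in> E" using W e cfg_sub by blast
  show "cfg (W - {e})"
    unfolding configuration_def
  proof (intro conjI ballI impI)
    show "W - {e} \<subseteq> E" using Wc cfg_sub by blast
    show "finite (W - {e})" using W by simp
    fix x e' assume x: "x \<in> W - {e}" and e': "e' \<in> E" "(e', x) \<in> G\<^sup>+"
    then have "e' \<in> W" using Wc unfolding configuration_def by blast
    moreover have "e' \<noteq> e" using mx x e' by blast
    ultimately show "e' \<in> W - {e}" by blast
  next
    fix x y assume "x \<in> W - {e}" "y \<in> W - {e}"
    then show "\<not> conflict C G x y" using cfg_nc Wc by blast
  qed
  show "pre e \<subseteq> cut C G (W - {e})"
  proof
    fix b assume b: "b \<in> pre e"
    have bC: "b \<in> C" using pre_C eE b by blast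
    have gen: "b \<in> min_conds C G \<or> (\<exists>w\<in>W - {e}. (w, b) \<in> G)"
    proof (cases "\<exists>w. (w, b) \<in> G")
      case True
      then obtain w where w: "(w, b) \<in> G" by blast
      then have "(w, e) \<in> G\<^sup>+" using b unfolding preset_def by auto
      moreover have "w \<in> E" using G_C2 w bC by blast
      ultimately have "w \<in> W" "w \<noteq> e" using Wc e acyc unfolding configuration_def by blast+
      then show ?thesis using w by blast
    next
      case False
      then show ?thesis using bC unfolding min_conds_mem by blast
    qed
    have "\<forall>u\<in>W - {e}. (b, u) \<notin> G"
    proof (intro ballI notI)
      fix u assume "u \<in> W - {e}" "(b, u) \<in> G"
      then show False using cfg_nc2[OF Wc _ e bC] b unfolding preset_def by blast
    qed
    then show "b \<in> cut C G (W - {e})" using gen unfolding cut_mem by blast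
  qed
qed

lemma exists_max:
  assumes "finite W" "W \<noteq> {}" "W \<subseteq> C \<union> E"
  shows "\<exists>e\<in>W. \<forall>e'\<in>W. (e, e') \<notin> G\<^sup>+"
proof -
  define f where "f x = card {y. (y, x) \<in> G\<^sup>+}" for x
  have "Max (f ` W) \<in> f ` W" using assms by (intro Max_in) auto
  then obtain e where e: "e \<in> W" "f e = Max (f ` W)" by (metis imageE)
  have "(e, e') \<notin> G\<^sup>+" if e': "e' \<in> W" for e'
  proof
    assume ee: "(e, e') \<in> G\<^sup>+"
    have "{y. (y, e) \<in> G\<^sup>+} \<subset> {y. (y, e') \<in> G\<^sup>+}"
    proof
      show "{y. (y, e) \<in> G\<^sup>+} \<subseteq> {y. (y, e') \<in> G\<^sup>+}" using ee by auto
      show "{y. (y, e) \<in> G\<^sup>+} \<noteq> {y. (y, e') \<in> G\<^sup>+}" using ee acyc by blast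
    qed
    moreover have "finite {y. (y, e') \<in> G\<^sup>+}" using fin_pred e' assms by blast
    ultimately have "f e < f e'" unfolding f_def by (simp add: psubset_card_mono)
    moreover have "f e' \<le> Max (f ` W)" using e' assms by simp
    ultimately show False using e by simp
  qed
  then show ?thesis using e by blast
qed

lemma cfg_reach: "cfg W \<Longrightarrow> mark C G h W \<in> reach T F M0"
proof (induction "card W" arbitrary: W)
  case 0
  then have "W = {}" by simp
  then have "mark C G h W = M0" unfolding mark_def cut_def using card_min by auto
  then show ?case by (simp add: reach.init)
next
  case (Suc n)
  then have "W \<noteq> {}" by auto
  moreover have "W \<subseteq> C \<union> E" using Suc.prems cfg_sub by blast
  ultimately obtain e where e: "e \<in> W" "\<forall>e'\<in>W. (e, e') \<notin> G\<^sup>+" using exists_max Suc.prems by blast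
  have W': "cfg (W - {e})" and pe: "pre e \<subseteq> cut C G (W - {e})" using remove_max Suc.prems e by blast+
  have eE: "e \<in> E" using e Suc.prems cfg_sub by blast
  have "card (W - {e}) = n" using Suc e by simp
  then have r: "mark C G h (W - {e}) \<in> reach T F M0" using Suc.hyps W' by blast
  have ins: "insert e (W - {e}) = W" using e by blast
  have m: "mark C G h W = fire F (mark C G h (W - {e})) (h e)" using extend(5)[OF W' eE pe] ins by simp
  have "enabled F (mark C G h (W - {e})) (h e)"
    unfolding enabled_def
  proof
    fix p assume p: "p \<in> preset F (h e)"
    then obtain c where c: "c \<in> pre e" "h c = p" using bij_pre eE by (metis bij_betw_def imageE)
    then have "c \<in> {c \<in> cut C G (W - {e}). h c = p}" using pe by blast
    moreover have "finite {c \<in> cut C G (W - {e}). h c = p}" using cut_fin W' by simp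
    ultimately show "0 < mark C G h (W - {e}) p" unfolding mark_def using card_gt_0_iff by blast
  qed
  moreover have "h e \<in> T" using hE eE by blast
  ultimately show ?case using m r reach.step[of "mark C G h (W - {e})" T F M0 "h e"] by simp
qed

end


context unf begin

lemma fut_mem: "x \<in> future C E G X \<longleftrightarrow> x \<in> C \<union> E \<and> x \<notin> X \<and> (\<forall>e\<in>X. (x, e) \<notin> G) \<and> (\<forall>e\<in>X. \<not> conflict C G x e)"
  unfolding future_def preset_def by auto

lemma cut_fut: "configuration C E G X \<Longrightarrow> cut C G X \<subseteq> future C E G X"
proof
  fix b assume a: "configuration C E G X" "b \<in> cut C G X"
  have "b \<in> C" using a cut_sub cfg_sub by blast
  moreover have "b \<notin> X" using calculation a cfg_sub CE_disj by blast
  moreover have "\<forall>e\<in>X. (b, e) \<notin> G" using a(2) cut_mem by blast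
  moreover have "\<forall>e\<in>X. \<not> conflict C G b e" using cut_noconf[OF a] by blast
  ultimately show "b \<in> future C E G X" unfolding fut_mem by blast
qed

lemma post_fut: "configuration C E G X \<Longrightarrow> e \<in> future C E G X \<Longrightarrow> e \<in> E \<Longrightarrow> b \<in> post e \<Longrightarrow> b \<in> future C E G X"
proof -
  assume a: "configuration C E G X" "e \<in> future C E G X" "e \<in> E" "b \<in> post e"
  have eb: "(e, b) \<in> G" using a by (simp add: postset_def)
  have bC: "b \<in> C" using post_C a by blast
  have "b \<notin> X" using bC a cfg_sub CE_disj by blast
  moreover have "(b, u) \<notin> G" if "u \<in> X" for u
  proof
    assume "(b, u) \<in> G"
    then have "(e, u) \<in> G\<^sup>+" using eb by auto
    then have "e \<in> X" using a that unfolding configuration_def by blast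
    then show False using a fut_mem by blast
  qed
  moreover have "\<not> conflict C G b x" if "x \<in> X" for x
  proof
    assume "conflict C G b x"
    then have "conflict C G e x" using conflict_cond_pre bC eb by blast
    then show False using a that fut_mem by blast
  qed
  ultimately show ?thesis using bC unfolding fut_mem by blast
qed

lemma fut_pre_ev: "configuration C E G X \<Longrightarrow> b \<in> future C E G X \<Longrightarrow> b \<in> C \<Longrightarrow> (w, b) \<in> G \<Longrightarrow> w \<notin> X \<Longrightarrow> w \<in> future C E G X"
proof -
  assume a: "configuration C E G X" "b \<in> future C E G X" "b \<in> C" "(w, b) \<in> G" "w \<notin> X"
  have "w \<in> E" using a G_C2 by blast
  then have "w \<notin> C" using CE_disj by blast
  have "(w, e) \<notin> G" if "e \<in> X" for e using G_E2 that a cfg_sub \<open>w \<notin> C\<close> by blast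
  moreover have "\<not> conflict C G w e" if "e \<in> X" for e
  proof
    assume "conflict C G w e"
    then have "conflict C G b e" using conflict_mono_l[OF _ r_into_rtrancl[OF a(4)]] by blast
    then show False using a that fut_mem by blast
  qed
  ultimately show ?thesis using \<open>w \<in> E\<close> a unfolding fut_mem by blast
qed

lemma fut_cond_cut: "configuration C E G X \<Longrightarrow> b \<in> future C E G X \<Longrightarrow> b \<in> C \<Longrightarrow> (\<forall>w. (w, b) \<in> G \<longrightarrow> w \<in> X) \<Longrightarrow> b \<in> cut C G X"
  unfolding cut_mem fut_mem min_conds_mem by blast

lemma cut_pre_notfut: "configuration C E G X \<Longrightarrow> b \<in> cut C G X \<Longrightarrow> (w, b) \<in> G \<Longrightarrow> w \<notin> future C E G X"
  using cut_pre fut_mem by blast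

definition good where
  "good X1 X2 \<sigma> \<longleftrightarrow> cfg X1 \<and> cfg X2 \<and> bij_betw \<sigma> (cut C G X1) (cut C G X2) \<and> (\<forall>b\<in>cut C G X1. h (\<sigma> b) = h b)"

inductive Rel :: "'n set \<Rightarrow> 'n set \<Rightarrow> ('n \<Rightarrow> 'n) \<Rightarrow> 'n \<Rightarrow> 'n \<Rightarrow> bool" for X1 X2 \<sigma> where
  r1: "b \<in> cut C G X1 \<Longrightarrow> Rel X1 X2 \<sigma> b (\<sigma> b)"
| r2: "e \<in> E \<Longrightarrow> e' \<in> E \<Longrightarrow> e \<in> future C E G X1 \<Longrightarrow> e' \<in> future C E G X2 \<Longrightarrow> h e = h e' \<Longrightarrow>
       (\<forall>b\<in>pre e. \<exists>b'\<in>pre e'. Rel X1 X2 \<sigma> b b') \<Longrightarrow> (\<forall>b'\<in>pre e'. \<exists>b\<in>pre e. Rel X1 X2 \<sigma> b b') \<Longrightarrow> Rel X1 X2 \<sigma> e e'"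
| r3: "Rel X1 X2 \<sigma> e e' \<Longrightarrow> e \<in> E \<Longrightarrow> b \<in> post e \<Longrightarrow> b' \<in> post e' \<Longrightarrow> h b = h b' \<Longrightarrow> Rel X1 X2 \<sigma> b b'"

context
  fixes X1 X2 :: "'n set" and \<sigma> :: "'n \<Rightarrow> 'n"
  assumes gd: "good X1 X2 \<sigma>"
begin

abbreviation R where "R \<equiv> Rel X1 X2 \<sigma>"

lemma X1c: "configuration C E G X1" and X2c: "configuration C E G X2" and X1f: "finite X1" and X2f: "finite X2"
  and sbij: "bij_betw \<sigma> (cut C G X1) (cut C G X2)" and sh: "\<And>b. b \<in> cut C G X1 \<Longrightarrow> h (\<sigma> b) = h b"
  using gd unfolding good_def by auto

lemma R_props: "R x y \<Longrightarrow> x \<in> future C E G X1 \<and> y \<in> future C E G X2 \<and> h x = h y \<and> (x \<in> E \<longleftrightarrow> y \<in> E) \<and> (x \<in> C \<longleftrightarrow> y \<in> C)"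
proof (induction rule: Rel.induct)
  case (r1 b)
  have "\<sigma> b \<in> cut C G X2" using sbij r1 bij_betwE by blast
  moreover have "b \<in> C" "\<sigma> b \<in> C" using r1 calculation cut_sub cfg_sub X1c X2c by blast+
  moreover have "b \<in> future C E G X1" using r1 cut_fut[OF X1c] by blast
  moreover have "\<sigma> b \<in> future C E G X2" using calculation(1) cut_fut[OF X2c] by blast
  moreover have "h (\<sigma> b) = h b" using sh r1 by blast
  ultimately show ?case using CE_disj by auto
next
  case (r2 e e')
  then show ?case using CE_disj by blast
next
  case (r3 e e' b b')
  then have "e' \<in> E" by blast
  have "b \<in> future C E G X1" using post_fut[OF X1c] r3 by blast
  moreover have "b' \<in> future C E G X2" using post_fut[OF X2c] r3 \<open>e' \<in> E\<close> by blast
  moreover have "b \<in> C" "b' \<in> C" using post_C r3 \<open>e' \<in> E\<close> by auto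
  ultimately show ?case using r3 CE_disj by auto
qed

lemma R_cond_inv:
  assumes "R b z" "b \<in> C"
  shows "(b \<in> cut C G X1 \<and> z = \<sigma> b) \<or> (\<exists>e e'. R e e' \<and> e \<in> E \<and> b \<in> post e \<and> z \<in> post e' \<and> h b = h z)"
  using assms(1)
proof (cases rule: Rel.cases)
  case r1 then show ?thesis by simp
next
  case r2
  then have "b \<in> E" by simp
  then show ?thesis using assms(2) CE_disj by auto
next
  case r3 then show ?thesis by auto
qed

lemma R_ev_inv:
  assumes "R e z" "e \<in> E"
  shows "z \<in> E \<and> (\<forall>b\<in>pre e. \<exists>b'\<in>pre z. R b b') \<and> (\<forall>b'\<in>pre z. \<exists>b\<in>pre e. R b b')"
  using assms(1)
proof (cases rule: Rel.cases)
  case r1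
  then have "e \<in> C" using cut_sub[OF cfg_sub[OF X1c]] by auto
  then show ?thesis using assms(2) CE_disj by auto
next
  case r2 then show ?thesis by simp
next
  case (r3 e0 e0')
  then have "e \<in> C" using post_C by auto
  then show ?thesis using assms(2) CE_disj by auto
qed

lemma R_func: "R x y \<Longrightarrow> R x z \<Longrightarrow> y = z"
proof (induction arbitrary: z rule: Rel.induct)
  case (r1 b)
  have bC: "b \<in> C" using r1.hyps cut_sub cfg_sub X1c by blast
  from R_cond_inv[OF r1.prems bC] show ?case
  proof
    assume "b \<in> cut C G X1 \<and> z = \<sigma> b" then show ?thesis by simp
  next
    assume "\<exists>e e'. R e e' \<and> e \<in> E \<and> b \<in> post e \<and> z \<in> post e' \<and> h b = h z"
    then obtain e e' where r3: "R e e'" "b \<in> post e" by blast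
    then have "e \<in> future C E G X1" using R_props[of e e'] by blast
    moreover have "(e, b) \<in> G" using r3(2) by (simp add: postset_def)
    ultimately show ?thesis using cut_pre_notfut r1.hyps X1c by blast
  qed
next
  case (r2 e e')
  have r2': "z \<in> E" "\<forall>b\<in>pre e. \<exists>b'\<in>pre z. R b b'" "\<forall>b'\<in>pre z. \<exists>b\<in>pre e. R b b'"
    using R_ev_inv[OF r2.prems r2.hyps(1)] by auto
  have "pre e' = pre z"
  proof
    show "pre e' \<subseteq> pre z"
    proof
      fix b' assume "b' \<in> pre e'"
      then obtain b where b: "b \<in> pre e" "R b b'" "\<forall>z. R b z \<longrightarrow> b' = z" using r2.IH(2) by blast
      then obtain b'' where "b'' \<in> pre z" "R b b''" using r2' by blast
      then show "b' \<in> pre z" using b by blast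
    qed
    show "pre z \<subseteq> pre e'"
    proof
      fix b'' assume "b'' \<in> pre z"
      then obtain b where b: "b \<in> pre e" "R b b''" using r2' by blast
      then obtain b' where "b' \<in> pre e'" "R b b'" "\<forall>z. R b z \<longrightarrow> b' = z" using r2.IH(1) by blast
      then show "b'' \<in> pre e'" using b by blast
    qed
  qed
  moreover have "h e' = h z" using R_props[OF r2.prems] r2.hyps(5) by simp
  ultimately show ?case using uniq_ev[OF r2.hyps(2) r2'(1)] by blast
next
  case (r3 e e' b b')
  have bC: "b \<in> C" using post_C r3.hyps by blast
  from R_cond_inv[OF r3.prems bC] show ?case
  proof
    assume a: "b \<in> cut C G X1 \<and> z = \<sigma> b"
    have "e \<in> future C E G X1" using R_props[OF r3.hyps(1)] by blast
    moreover have "(e, b) \<in> G" using r3.hyps(3) by (simp add: postset_def)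
    ultimately show ?thesis using cut_pre_notfut a X1c by blast
  next
    assume "\<exists>e e'. R e e' \<and> e \<in> E \<and> b \<in> post e \<and> z \<in> post e' \<and> h b = h z"
    then obtain e0 e0' where r3': "R e0 e0'" "e0 \<in> E" "b \<in> post e0" "z \<in> post e0'" "h b = h z" by blast
    have "(e0, b) \<in> G" "(e, b) \<in> G" using r3.hyps(3) r3'(3) by (auto simp: postset_def)
    then have "e0 = e" using uniq_pre[OF bC] by blast
    then have "e0' = e'" using r3.IH r3' by blast
    moreover have "e' \<in> E" using R_props[OF r3.hyps(1)] r3.hyps(2) by blast
    ultimately have "inj_on h (post e')" "z \<in> post e'" using bij_post[of e'] r3' unfolding bij_betw_def by auto
    moreover have "b' \<in> post e'" "h b' = h z" using r3.hyps(4,5) r3'(5) by auto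
    ultimately show ?thesis using inj_onD[of h "post e'" b' z] by blast
  qed
qed


lemma R_inj: "R x z \<Longrightarrow> R y z \<Longrightarrow> x = y"
proof (induction arbitrary: y rule: Rel.induct)
  case (r1 b)
  have sb: "\<sigma> b \<in> cut C G X2" using sbij r1.hyps bij_betwE by blast
  have "\<sigma> b \<in> C" using sb cut_sub cfg_sub X2c by blast
  then have yC: "y \<in> C" using R_props[OF r1.prems] by blast
  from R_cond_inv[OF r1.prems yC] show ?case
  proof
    assume "y \<in> cut C G X1 \<and> \<sigma> b = \<sigma> y"
    then show ?thesis using sbij r1.hyps unfolding bij_betw_def inj_on_def by blast
  next
    assume "\<exists>e e'. R e e' \<and> e \<in> E \<and> y \<in> post e \<and> \<sigma> b \<in> post e' \<and> h y = h (\<sigma> b)"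
    then obtain e e' where ee: "R e e'" "\<sigma> b \<in> post e'" by blast
    then have "e' \<in> future C E G X2" using R_props[of e e'] by blast
    moreover have "(e', \<sigma> b) \<in> G" using ee(2) by (simp add: postset_def)
    ultimately show ?thesis using cut_pre_notfut sb X2c by blast
  qed
next
  case (r2 e e')
  have yE: "y \<in> E" using R_props[OF r2.prems] r2.hyps(2) by blast
  have r2': "\<forall>b\<in>pre y. \<exists>b'\<in>pre e'. R b b'" "\<forall>b'\<in>pre e'. \<exists>b\<in>pre y. R b b'"
    using R_ev_inv[OF r2.prems yE] by auto
  have "pre e = pre y"
  proof
    show "pre e \<subseteq> pre y"
    proof
      fix b assume "b \<in> pre e"
      then obtain b' where b: "b' \<in> pre e'" "R b b'" "\<forall>y. R y b' \<longrightarrow> b = y" using r2.IH(1) by blast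
      then obtain b2 where "b2 \<in> pre y" "R b2 b'" using r2' by blast
      then show "b \<in> pre y" using b by blast
    qed
    show "pre y \<subseteq> pre e"
    proof
      fix b2 assume "b2 \<in> pre y"
      then obtain b' where b: "b' \<in> pre e'" "R b2 b'" using r2' by blast
      then obtain b where "b \<in> pre e" "R b b'" "\<forall>y. R y b' \<longrightarrow> b = y" using r2.IH(2) by blast
      then show "b2 \<in> pre e" using b by blast
    qed
  qed
  moreover have "h e = h y" using R_props[OF r2.prems] r2.hyps(5) by simp
  ultimately show ?case using uniq_ev[OF r2.hyps(1) yE] by blast
next
  case (r3 e e' b b')
  have e'E: "e' \<in> E" using R_props[OF r3.hyps(1)] r3.hyps(2) by blast
  have b'C: "b' \<in> C" using post_C e'E r3.hyps(4) by blast
  then have yC: "y \<in> C" using R_props[OF r3.prems] by blast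
  from R_cond_inv[OF r3.prems yC] show ?case
  proof
    assume a: "y \<in> cut C G X1 \<and> b' = \<sigma> y"
    then have "b' \<in> cut C G X2" using sbij bij_betwE by blast
    moreover have "e' \<in> future C E G X2" using R_props[OF r3.hyps(1)] by blast
    moreover have "(e', b') \<in> G" using r3.hyps(4) by (simp add: postset_def)
    ultimately show ?thesis using cut_pre_notfut X2c by blast
  next
    assume "\<exists>e e'. R e e' \<and> e \<in> E \<and> y \<in> post e \<and> b' \<in> post e' \<and> h y = h b'"
    then obtain e0 e0' where r3': "R e0 e0'" "e0 \<in> E" "y \<in> post e0" "b' \<in> post e0'" "h y = h b'" by blast
    have "(e0', b') \<in> G" "(e', b') \<in> G" using r3.hyps(4) r3'(4) by (auto simp: postset_def)
    then have "e0' = e'" using uniq_pre[OF b'C] by blast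
    then have "e = e0" using r3.IH r3'(1) by blast
    then have "inj_on h (post e)" "y \<in> post e" using bij_post[of e] r3.hyps(2) r3'(3) unfolding bij_betw_def by auto
    moreover have "b \<in> post e" "h b = h y" using r3.hyps(3,5) r3'(5) by auto
    ultimately show ?thesis using inj_onD[of h "post e" b y] by blast
  qed
qed

end
end


context unf begin

context
  fixes X1 X2 :: "'n set" and \<sigma> :: "'n \<Rightarrow> 'n"
  assumes gd: "good X1 X2 \<sigma>"
begin

abbreviation RR where "RR \<equiv> Rel X1 X2 \<sigma>"
abbreviation Img where "Img Xs \<equiv> {y. \<exists>x\<in>Xs. RR x y}"

lemmas Rp = R_props[OF gd] and Rf = R_func[OF gd] and Ri = R_inj[OF gd]
lemmas X1c' = X1c[OF gd] and X2c' = X2c[OF gd] and sbij' = sbij[OF gd] and sh' = sh[OF gd]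

lemma X1f': "finite X1" and X2f': "finite X2" using gd unfolding good_def by auto

lemma core:
  "finite Xs \<Longrightarrow> Xs \<inter> X1 = {} \<Longrightarrow> cfg (X1 \<union> Xs) \<Longrightarrow>
   (\<forall>x\<in>Xs. \<exists>y. RR x y) \<and> cfg (X2 \<union> Img Xs) \<and> Img Xs \<inter> X2 = {} \<and>
   (\<forall>b\<in>cut C G (X1 \<union> Xs). \<exists>b'\<in>cut C G (X2 \<union> Img Xs). RR b b') \<and>
   (\<forall>b'\<in>cut C G (X2 \<union> Img Xs). \<exists>b\<in>cut C G (X1 \<union> Xs). RR b b')"
proof (induction "card Xs" arbitrary: Xs)
  case 0
  then have Xs: "Xs = {}" by simp
  have "Img Xs = {}" using Xs by simp
  moreover have "\<forall>b\<in>cut C G X1. \<exists>b'\<in>cut C G X2. RR b b'"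
    using sbij' Rel.r1 bij_betwE by blast
  moreover have "\<forall>b'\<in>cut C G X2. \<exists>b\<in>cut C G X1. RR b b'"
  proof
    fix b' assume "b' \<in> cut C G X2"
    then obtain b where "b \<in> cut C G X1" "b' = \<sigma> b" using sbij' unfolding bij_betw_def by blast
    then show "\<exists>b\<in>cut C G X1. RR b b'" using Rel.r1 by blast
  qed
  ultimately show ?case using Xs X2c' X2f' by simp
next
  case (Suc n)
  have W: "cfg (X1 \<union> Xs)" using Suc.prems by blast
  have Wc: "configuration C E G (X1 \<union> Xs)" using W by blast
  have "Xs \<noteq> {}" using Suc.hyps by auto
  moreover have "Xs \<subseteq> C \<union> E" using W cfg_sub by blast
  ultimately have "\<exists>e\<in>Xs. \<forall>e'\<in>Xs. (e, e') \<notin> G\<^sup>+" using exists_max[OF Suc.prems(1)] by blast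
  then obtain e where e: "e \<in> Xs" "\<forall>e'\<in>Xs. (e, e') \<notin> G\<^sup>+" by blast
  have eX1: "e \<notin> X1" using e(1) Suc.prems(2) by blast
  have eE: "e \<in> E" using e W cfg_sub by blast
  have mx: "\<forall>e'\<in>X1 \<union> Xs. (e, e') \<notin> G\<^sup>+"
  proof
    fix e' assume "e' \<in> X1 \<union> Xs"
    then show "(e, e') \<notin> G\<^sup>+"
    proof
      assume "e' \<in> X1"
      then have "(e, e') \<in> G\<^sup>+ \<Longrightarrow> e \<in> X1" using X1c' eE unfolding configuration_def by blast
      then show ?thesis using eX1 by blast
    next
      assume "e' \<in> Xs" then show ?thesis using e by blast
    qed
  qed
  define Ex0 where "Ex0 = Xs - {e}"
  have WE: "X1 \<union> Xs - {e} = X1 \<union> Ex0" using eX1 unfolding Ex0_def by blast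
  have Y: "cfg (X1 \<union> Ex0)" and pe: "pre e \<subseteq> cut C G (X1 \<union> Ex0)"
    using remove_max[OF W _ mx] e WE by auto
  have "card Ex0 = n" using Suc.hyps(2) e(1) Suc.prems(1) unfolding Ex0_def by simp
  moreover have "finite Ex0" "Ex0 \<inter> X1 = {}" using Suc.prems unfolding Ex0_def by auto
  ultimately have IH: "(\<forall>x\<in>Ex0. \<exists>y. RR x y) \<and> cfg (X2 \<union> Img Ex0) \<and> Img Ex0 \<inter> X2 = {} \<and>
     (\<forall>b\<in>cut C G (X1 \<union> Ex0). \<exists>b'\<in>cut C G (X2 \<union> Img Ex0). RR b b') \<and>
     (\<forall>b'\<in>cut C G (X2 \<union> Img Ex0). \<exists>b\<in>cut C G (X1 \<union> Ex0). RR b b')"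
    using Suc.hyps(1)[of Ex0] Y by blast
  define Y' where "Y' = X2 \<union> Img Ex0"
  have Y': "cfg Y'" using IH Y'_def by blast
  have IHc1: "\<forall>b\<in>cut C G (X1 \<union> Ex0). \<exists>b'\<in>cut C G Y'. RR b b'" using IH Y'_def by blast
  have IHc2: "\<forall>b'\<in>cut C G Y'. \<exists>b\<in>cut C G (X1 \<union> Ex0). RR b b'" using IH Y'_def by blast
  define B' where "B' = {b'. \<exists>b\<in>pre e. RR b b'}"
  have B'cut: "B' \<subseteq> cut C G Y'"
  proof
    fix b' assume "b' \<in> B'"
    then obtain b where b: "b \<in> pre e" "RR b b'" unfolding B'_def by blast
    then obtain b'' where "b'' \<in> cut C G Y'" "RR b b''" using IHc1 pe by blast
    then show "b' \<in> cut C G Y'" using Rf b by blast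
  qed
  have B'C: "B' \<subseteq> C" using B'cut cut_sub cfg_sub Y' by blast
  have B'co: "coset C G B'" using coset_subset cut_coset Y' B'cut by blast
  have heT: "h e \<in> T" using hE eE by blast
  have B'bij: "bij_betw h B' (preset F (h e))"
    unfolding bij_betw_def
  proof
    show "inj_on h B'"
    proof (rule inj_onI)
      fix x y assume xy: "x \<in> B'" "y \<in> B'" "h x = h y"
      then obtain bx by' where b: "bx \<in> pre e" "RR bx x" "by' \<in> pre e" "RR by' y" unfolding B'_def by blast
      then have "h bx = h x" "h by' = h y" using Rp[OF b(2)] Rp[OF b(4)] by auto
      then have "h bx = h by'" using xy(3) by simp
      then have "bx = by'" using bij_pre[OF eE] b unfolding bij_betw_def inj_on_def by blast
      then show "x = y" using Rf b by blast
    qed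
    show "h ` B' = preset F (h e)"
    proof
      show "h ` B' \<subseteq> preset F (h e)"
      proof
        fix p assume "p \<in> h ` B'"
        then obtain b' b where bb: "b \<in> pre e" "RR b b'" "p = h b'" unfolding B'_def by blast
        then have "p = h b" "b \<in> pre e" using Rp[OF bb(2)] by auto
        then show "p \<in> preset F (h e)" using bij_pre[OF eE] bij_betwE by blast
      qed
      show "preset F (h e) \<subseteq> h ` B'"
      proof
        fix p assume "p \<in> preset F (h e)"
        then have "p \<in> h ` pre e" using bij_pre[OF eE] unfolding bij_betw_def by simp
        then obtain b where b: "b \<in> pre e" "h b = p" by blast
        then obtain b' where bb: "RR b b'" using IHc1 pe by blast
        then have "b' \<in> B'" "h b' = p" using b Rp[OF bb] unfolding B'_def by auto
        then show "p \<in> h ` B'" by blast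
      qed
    qed
  qed
  obtain e' where e': "e' \<in> E" "pre e' = B'" "h e' = h e" using ext[OF B'C B'co heT B'bij] by blast
  have pe': "pre e' \<subseteq> cut C G Y'" using e' B'cut by simp
  note ext' = extend[OF Y' e'(1) pe']
  have efut: "e \<in> future C E G X1"
    unfolding fut_mem
  proof (intro conjI ballI)
    show "e \<in> C \<union> E" using eE by blast
    show "e \<notin> X1" using eX1 .
    fix x assume x: "x \<in> X1"
    show "(e, x) \<notin> G" using G_E2 eE CE_disj x X1c' cfg_sub by blast
    show "\<not> conflict C G e x" using cfg_nc Wc e x by blast
  qed
  have e'fut: "e' \<in> future C E G X2"
    unfolding fut_mem
  proof (intro conjI ballI)
    show "e' \<in> C \<union> E" using e' by blast
    show "e' \<notin> X2" using ext'(1) Y'_def by blast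
    fix x assume x: "x \<in> X2"
    show "(e', x) \<notin> G" using G_E2 e'(1) CE_disj x X2c' cfg_sub by blast
    have "configuration C E G (insert e' Y')" using ext'(2) by blast
    then show "\<not> conflict C G e' x" using cfg_nc x Y'_def by blast
  qed
  have Ree: "RR e e'"
  proof (rule Rel.r2[OF eE e'(1) efut e'fut e'(3)[symmetric]])
    show "\<forall>b\<in>pre e. \<exists>b'\<in>pre e'. RR b b'"
    proof
      fix b assume b: "b \<in> pre e"
      then obtain b' where "RR b b'" using IHc1 pe by blast
      then show "\<exists>b'\<in>pre e'. RR b b'" using b e'(2) B'_def by blast
    qed
    show "\<forall>b'\<in>pre e'. \<exists>b\<in>pre e. RR b b'" using e'(2) B'_def by blast
  qed
  have ImgEx: "Img Xs = insert e' (Img Ex0)"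
  proof
    show "Img Xs \<subseteq> insert e' (Img Ex0)"
    proof
      fix y assume "y \<in> Img Xs"
      then obtain x where x: "x \<in> Xs" "RR x y" by blast
      show "y \<in> insert e' (Img Ex0)"
      proof (cases "x = e")
        case True
        then have "RR e y" using x by simp
        then have "e' = y" using Rf[OF Ree] by blast
        then show ?thesis by blast
      next
        case False then show ?thesis using x unfolding Ex0_def by blast
      qed
    qed
    show "insert e' (Img Ex0) \<subseteq> Img Xs" using Ree e(1) unfolding Ex0_def by blast
  qed
  have XY: "X2 \<union> Img Xs = insert e' Y'" using ImgEx Y'_def by blast
  have XW: "X1 \<union> Xs = insert e (X1 \<union> Ex0)" using e(1) unfolding Ex0_def by blast
  note extW = extend[OF Y eE pe]
  have cutW: "cut C G (X1 \<union> Xs) = (cut C G (X1 \<union> Ex0) - pre e) \<union> post e" using extW(3) XW by simp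
  have cutW': "cut C G (X2 \<union> Img Xs) = (cut C G Y' - B') \<union> post e'" using ext'(3) XY e'(2) by simp
  have postmatch: "\<forall>b\<in>post e. \<exists>b'\<in>post e'. RR b b'"
  proof
    fix b assume b: "b \<in> post e"
    then have "h b \<in> postset F (h e')" using bij_post[OF eE] e'(3) bij_betwE by metis
    then obtain b' where "b' \<in> post e'" "h b' = h b" using bij_post[OF e'(1)] unfolding bij_betw_def by (metis imageE)
    then show "\<exists>b'\<in>post e'. RR b b'" using Rel.r3[OF Ree eE b, of b'] by auto
  qed
  have postmatch2: "\<forall>b'\<in>post e'. \<exists>b\<in>post e. RR b b'"
  proof
    fix b' assume b': "b' \<in> post e'"
    then have "h b' \<in> postset F (h e)" using bij_post[OF e'(1)] e'(3) bij_betwE by metis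
    then obtain b where "b \<in> post e" "h b = h b'" using bij_post[OF eE] unfolding bij_betw_def by (metis imageE)
    then show "\<exists>b\<in>post e. RR b b'" using Rel.r3[OF Ree eE _ b', of b] by auto
  qed
  have c1: "\<forall>b\<in>cut C G (X1 \<union> Xs). \<exists>b'\<in>(cut C G Y' - B') \<union> post e'. RR b b'"
  proof
    fix b assume "b \<in> cut C G (X1 \<union> Xs)"
    then have "b \<in> cut C G (X1 \<union> Ex0) - pre e \<or> b \<in> post e" using cutW by blast
    then show "\<exists>b'\<in>(cut C G Y' - B') \<union> post e'. RR b b'"
    proof
      assume b: "b \<in> cut C G (X1 \<union> Ex0) - pre e"
      then obtain b' where b': "b' \<in> cut C G Y'" "RR b b'" using IHc1 by blast
      have "b' \<notin> B'"
      proof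
        assume "b' \<in> B'"
        then obtain b0 where b0: "b0 \<in> pre e" "RR b0 b'" unfolding B'_def by blast
        then have "b0 = b" using Ri[OF b0(2) b'(2)] by blast
        then show False using b b0 by blast
      qed
      then show ?thesis using b' by blast
    next
      assume "b \<in> post e"
      then show ?thesis using postmatch by blast
    qed
  qed
  have c2: "\<forall>b'\<in>(cut C G Y' - B') \<union> post e'. \<exists>b\<in>(cut C G (X1 \<union> Ex0) - pre e) \<union> post e. RR b b'"
  proof
    fix b' assume "b' \<in> (cut C G Y' - B') \<union> post e'"
    then have "b' \<in> cut C G Y' - B' \<or> b' \<in> post e'" by blast
    then show "\<exists>b\<in>(cut C G (X1 \<union> Ex0) - pre e) \<union> post e. RR b b'"
    proof
      assume b': "b' \<in> cut C G Y' - B'"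
      then obtain b where b: "b \<in> cut C G (X1 \<union> Ex0)" "RR b b'" using IHc2 by blast
      have "b \<notin> pre e" using b b' unfolding B'_def by blast
      then show ?thesis using b by blast
    next
      assume "b' \<in> post e'"
      then show ?thesis using postmatch2 by blast
    qed
  qed
  have IHt: "\<forall>x\<in>Ex0. \<exists>y. RR x y" using IH by (rule conjunct1)
  have IHd: "Img Ex0 \<inter> X2 = {}" using IH by (elim conjE)
  have t: "\<forall>x\<in>Xs. \<exists>y. RR x y"
  proof
    fix x assume "x \<in> Xs"
    then show "\<exists>y. RR x y" using IHt Ree unfolding Ex0_def by (cases "x = e") auto
  qed
  have cf: "cfg (X2 \<union> Img Xs)" using XY ext'(2) by simp
  have "e' \<notin> X2" using e'fut unfolding fut_mem by blast
  then have dj: "Img Xs \<inter> X2 = {}" unfolding ImgEx using IHd by blast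
  have c1': "\<forall>b\<in>cut C G (X1 \<union> Xs). \<exists>b'\<in>cut C G (X2 \<union> Img Xs). RR b b'"
    unfolding cutW' by (rule c1)
  have c2': "\<forall>b'\<in>cut C G (X2 \<union> Img Xs). \<exists>b\<in>cut C G (X1 \<union> Xs). RR b b'"
    unfolding cutW cutW' by (rule c2)
  show ?case by (rule conjI[OF t conjI[OF cf conjI[OF dj conjI[OF c1' c2']]]])
qed

end
end


context unf begin

definition Iso where "Iso X1 X2 \<sigma> x = (THE y. Rel X1 X2 \<sigma> x y)"

lemma Iso_eq: "good X1 X2 \<sigma> \<Longrightarrow> Rel X1 X2 \<sigma> x y \<Longrightarrow> Iso X1 X2 \<sigma> x = y"
  unfolding Iso_def using R_func by (intro the_equality) blast+

lemma Rel_cong: "Rel X1 X2 \<sigma> x y \<Longrightarrow> (\<forall>b\<in>cut C G X1. \<sigma> b = \<tau> b) \<Longrightarrow> Rel X1 X2 \<tau> x y"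
proof (induction rule: Rel.induct)
  case (r1 b)
  then have "\<sigma> b = \<tau> b" by blast
  then show ?case using Rel.r1[OF r1.hyps, of X2 \<tau>] by simp
next
  case (r2 e e')
  show ?case by (rule Rel.r2) (use r2 in auto)
next
  case (r3 e e' b b')
  show ?case by (rule Rel.r3[OF r3.IH[OF r3.prems]]) (use r3 in auto)
qed

lemma good_swap: "good X1 X2 \<sigma> \<Longrightarrow> good X2 X1 (the_inv_into (cut C G X1) \<sigma>)"
  unfolding good_def
proof (intro conjI ballI)
  assume g: "cfg X1 \<and> cfg X2 \<and> bij_betw \<sigma> (cut C G X1) (cut C G X2) \<and> (\<forall>b\<in>cut C G X1. h (\<sigma> b) = h b)"
  then show "configuration C E G X2" "finite X2" "configuration C E G X1" "finite X1" by auto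
  show "bij_betw (the_inv_into (cut C G X1) \<sigma>) (cut C G X2) (cut C G X1)"
    using g bij_betw_the_inv_into by blast
  fix b assume b: "b \<in> cut C G X2"
  have "the_inv_into (cut C G X1) \<sigma> b \<in> cut C G X1" using g b bij_betw_the_inv_into bij_betwE by blast
  moreover have "\<sigma> (the_inv_into (cut C G X1) \<sigma> b) = b" using g b f_the_inv_into_f_bij_betw by metis
  ultimately show "h (the_inv_into (cut C G X1) \<sigma> b) = h b" using g by metis
qed

lemma Rel_swap: "Rel X1 X2 \<sigma> x y \<Longrightarrow> good X1 X2 \<sigma> \<Longrightarrow> Rel X2 X1 (the_inv_into (cut C G X1) \<sigma>) y x"
proof (induction rule: Rel.induct)
  case (r1 b)
  have sb: "\<sigma> b \<in> cut C G X2" using r1 good_def bij_betwE by blast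
  have "the_inv_into (cut C G X1) \<sigma> (\<sigma> b) = b" using r1 good_def the_inv_into_f_f bij_betw_def by metis
  then show ?case using Rel.r1[OF sb, of X1 "the_inv_into (cut C G X1) \<sigma>"] by simp
next
  case (r2 e e')
  show ?case by (rule Rel.r2) (use r2 in auto)
next
  case (r3 e e' b b')
  have "e' \<in> E" using R_props[OF r3.prems r3.hyps(1)] r3.hyps(2) by blast
  then show ?case using Rel.r3[OF r3.IH[OF r3.prems]] r3.hyps by auto
qed

lemma Rel_swap_back: "good X1 X2 \<sigma> \<Longrightarrow> Rel X2 X1 (the_inv_into (cut C G X1) \<sigma>) y x \<Longrightarrow> Rel X1 X2 \<sigma> x y"
proof -
  assume g: "good X1 X2 \<sigma>" and r: "Rel X2 X1 (the_inv_into (cut C G X1) \<sigma>) y x"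
  define \<tau> where "\<tau> = the_inv_into (cut C G X1) \<sigma>"
  have g2: "good X2 X1 \<tau>" using good_swap g \<tau>_def by blast
  have "Rel X1 X2 (the_inv_into (cut C G X2) \<tau>) x y" using Rel_swap[OF _ g2] r \<tau>_def by blast
  moreover have "\<forall>b\<in>cut C G X1. the_inv_into (cut C G X2) \<tau> b = \<sigma> b"
  proof
    fix b assume b: "b \<in> cut C G X1"
    have bij: "bij_betw \<sigma> (cut C G X1) (cut C G X2)" using g good_def by blast
    then have "\<sigma> b \<in> cut C G X2" using b bij_betwE by blast
    moreover have "\<tau> (\<sigma> b) = b" using bij b \<tau>_def the_inv_into_f_f bij_betw_def by metis
    moreover have "inj_on \<tau> (cut C G X2)" using g2 good_def bij_betw_def by blast
    ultimately show "the_inv_into (cut C G X2) \<tau> b = \<sigma> b" using the_inv_into_f_f by metis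
  qed
  ultimately show ?thesis using Rel_cong[of X1 X2 "the_inv_into (cut C G X2) \<tau>" x y \<sigma>] by blast
qed

end


context unf begin

lemma lc_cfg: "e \<in> C \<union> E \<Longrightarrow> cfg {u\<in>E. (u, e) \<in> G\<^sup>*}"
proof -
  assume e: "e \<in> C \<union> E"
  let ?L = "{u\<in>E. (u, e) \<in> G\<^sup>*}"
  have "?L \<subseteq> insert e {y. (y, e) \<in> G\<^sup>+}" by (auto simp: rtrancl_eq_or_trancl)
  then have fin: "finite ?L" using fin_pred[OF e] finite_subset by blast
  have "configuration C E G ?L"
    unfolding configuration_def
  proof (intro conjI ballI impI)
    show "?L \<subseteq> E" by blast
    fix x e' assume "x \<in> ?L" "e' \<in> E" "(e', x) \<in> G\<^sup>+"
    then show "e' \<in> ?L" by auto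
  next
    fix x y assume xy: "x \<in> ?L" "y \<in> ?L"
    show "\<not> conflict C G x y"
    proof
      assume "conflict C G x y"
      then have "conflict C G e y" using conflict_mono_l[of C G x y e] xy by blast
      then have "conflict C G e e" using conflict_mono_r[of C G e y e] xy by blast
      then show False using no_self_conf e by blast
    qed
  qed
  then show ?thesis using fin by blast
qed

lemma reach_cfg: "M \<in> reach T F M0 \<Longrightarrow> \<exists>W. cfg W \<and> mark C G h W = M"
proof (induction rule: reach.induct)
  case init
  have "cfg {}" unfolding configuration_def by simp
  moreover have "mark C G h {} = M0" unfolding mark_def cut_def using card_min by auto
  ultimately show ?case by blast
next
  case (step M t)
  then obtain W where W: "cfg W" "mark C G h W = M" by blast
  have ex: "\<forall>p\<in>preset F t. \<exists>c. c \<in> cut C G W \<and> h c = p"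
  proof
    fix p assume "p \<in> preset F t"
    then have "0 < M p" using step.hyps(3) unfolding enabled_def by blast
    then have "0 < mark C G h W p" using W(2) by simp
    then have "0 < card {c \<in> cut C G W. h c = p}" unfolding mark_def .
    then have "{c \<in> cut C G W. h c = p} \<noteq> {}" by (metis card.empty less_irrefl)
    then show "\<exists>c. c \<in> cut C G W \<and> h c = p" by blast
  qed
  define g where "g p = (SOME c. c \<in> cut C G W \<and> h c = p)" for p
  have g: "g p \<in> cut C G W \<and> h (g p) = p" if "p \<in> preset F t" for p
  proof -
    have "\<exists>c. c \<in> cut C G W \<and> h c = p" using ex that by blast
    then show ?thesis unfolding g_def by (rule someI_ex)
  qed
  define B where "B = g ` preset F t"
  have Bcut: "B \<subseteq> cut C G W" using g B_def by blast
  have Bbij: "bij_betw h B (preset F t)"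
    unfolding bij_betw_def
  proof
    show "inj_on h B" unfolding B_def inj_on_def using g by auto
    show "h ` B = preset F t"
    proof
      show "h ` B \<subseteq> preset F t" unfolding B_def using g by auto
      show "preset F t \<subseteq> h ` B"
      proof
        fix p assume "p \<in> preset F t"
        then have "h (g p) = p" "g p \<in> B" using g B_def by auto
        then show "p \<in> h ` B" by (metis imageI)
      qed
    qed
  qed
  have BC: "B \<subseteq> C" using Bcut cut_sub cfg_sub W by blast
  have Bco: "coset C G B" using coset_subset cut_coset W Bcut by blast
  obtain e where e: "e \<in> E" "pre e = B" "h e = t" using ext[OF BC Bco step.hyps(2) Bbij] by blast
  have pe: "pre e \<subseteq> cut C G W" using e Bcut by simp
  note x = extend[OF W(1) e(1) pe]
  have "cfg (insert e W)" using x(2) .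
  moreover have "mark C G h (insert e W) = fire F M t" using x(5) W(2) e(3) by simp
  ultimately show ?case by blast
qed

lemma exists_sigma:
  assumes X1: "cfg X1" and X2: "cfg X2" and m: "mark C G h X1 = mark C G h X2"
  shows "\<exists>\<sigma>. good X1 X2 \<sigma>"
proof -
  define A where "A p = {c \<in> cut C G X1. h c = p}" for p
  define B where "B p = {c \<in> cut C G X2. h c = p}" for p
  have fA: "finite (A p)" for p using cut_fin X1 A_def by simp
  have fB: "finite (B p)" for p using cut_fin X2 B_def by simp
  have cAB: "card (A p) = card (B p)" for p using m unfolding mark_def A_def B_def by metis
  have "\<exists>f. bij_betw f (A p) (B p)" for p using finite_same_card_bij fA fB cAB by blast
  then obtain f where f: "\<And>p. bij_betw (f p) (A p) (B p)" by metis
  define \<sigma> where "\<sigma> b = f (h b) b" for b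
  have sB: "\<sigma> b \<in> B (h b)" if "b \<in> cut C G X1" for b
    unfolding \<sigma>_def using f[of "h b"] that A_def bij_betwE by blast
  have hs: "h (\<sigma> b) = h b" if "b \<in> cut C G X1" for b using sB[OF that] B_def by simp
  have "bij_betw \<sigma> (cut C G X1) (cut C G X2)"
    unfolding bij_betw_def
  proof
    show "inj_on \<sigma> (cut C G X1)"
    proof (rule inj_onI)
      fix x y assume xy: "x \<in> cut C G X1" "y \<in> cut C G X1" "\<sigma> x = \<sigma> y"
      then have hxy: "h x = h y" using hs by metis
      have "x \<in> A (h x)" "y \<in> A (h x)" using xy hxy A_def by auto
      moreover have "f (h x) x = f (h x) y" using xy(3) hxy \<sigma>_def by simp
      ultimately show "x = y" using f[of "h x"] unfolding bij_betw_def inj_on_def by blast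
    qed
    show "\<sigma> ` cut C G X1 = cut C G X2"
    proof
      show "\<sigma> ` cut C G X1 \<subseteq> cut C G X2" using sB B_def by blast
      show "cut C G X2 \<subseteq> \<sigma> ` cut C G X1"
      proof
        fix b' assume b': "b' \<in> cut C G X2"
        then have "b' \<in> B (h b')" using B_def by simp
        then obtain b where b: "b \<in> A (h b')" "f (h b') b = b'" using f[of "h b'"] unfolding bij_betw_def by (metis imageE)
        then have "b \<in> cut C G X1" "h b = h b'" using A_def by auto
        then show "b' \<in> \<sigma> ` cut C G X1" using b \<sigma>_def by (metis imageI)
      qed
    qed
  qed
  then have "good X1 X2 \<sigma>" unfolding good_def using X1 X2 hs by blast
  then show ?thesis by blast
qed

end


context unf begin

context
  fixes X1 X2 :: "'n set" and \<sigma> :: "'n \<Rightarrow> 'n"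
  assumes gd: "good X1 X2 \<sigma>"
begin

abbreviation R3 where "R3 \<equiv> Rel X1 X2 \<sigma>"
abbreviation II where "II \<equiv> Iso X1 X2 \<sigma>"

lemma tot_ev: "x \<in> future C E G X1 \<Longrightarrow> x \<in> E \<Longrightarrow> \<exists>y. R3 x y"
proof -
  assume xf: "x \<in> future C E G X1" and xE: "x \<in> E"
  have X1c: "configuration C E G X1" "finite X1" using gd good_def by auto
  define L where "L = {u\<in>E. (u, x) \<in> G\<^sup>*}"
  have Lc: "cfg L" using lc_cfg xE L_def by blast
  define Xs where "Xs = L - X1"
  have fin: "finite Xs" using Lc Xs_def by simp
  have dis: "Xs \<inter> X1 = {}" using Xs_def by blast
  have U: "X1 \<union> Xs = X1 \<union> L" using Xs_def by blast
  have "configuration C E G (X1 \<union> L)"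
    unfolding configuration_def
  proof (intro conjI ballI impI)
    show "X1 \<union> L \<subseteq> E" using X1c cfg_sub L_def by blast
    fix u e' assume u: "u \<in> X1 \<union> L" and e': "e' \<in> E" "(e', u) \<in> G\<^sup>+"
    show "e' \<in> X1 \<union> L"
    proof (cases "u \<in> X1")
      case True then show ?thesis using X1c e' unfolding configuration_def by blast
    next
      case False
      then have "(u, x) \<in> G\<^sup>*" using u L_def by blast
      then have "(e', x) \<in> G\<^sup>*" using e' by auto
      then show ?thesis using e' L_def by blast
    qed
  next
    fix u v assume u: "u \<in> X1 \<union> L" and v: "v \<in> X1 \<union> L"
    have nc1: "\<not> conflict C G a b" if "a \<in> L" "b \<in> X1" for a b
    proof
      assume "conflict C G a b"
      then have "conflict C G x b" using conflict_mono_l[of C G a b x] that L_def by blast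
      then show False using xf that fut_mem by blast
    qed
    have nc2: "\<not> conflict C G a b" if "a \<in> L" "b \<in> L" for a b
      using Lc that cfg_nc by blast
    have nc3: "\<not> conflict C G a b" if "a \<in> X1" "b \<in> X1" for a b
      using X1c that cfg_nc by blast
    show "\<not> conflict C G u v"
    proof
      assume c: "conflict C G u v"
      then have c': "conflict C G v u" using conflict_sym[of C G u v] by blast
      show False
      proof (cases "u \<in> X1")
        case True
        show False
        proof (cases "v \<in> X1")
          case True then show False using nc3 c \<open>u \<in> X1\<close> by blast
        next
          case False then show False using nc1 c' v \<open>u \<in> X1\<close> by blast
        qed
      next
        case False
        then have uL: "u \<in> L" using u by blast
        show False
        proof (cases "v \<in> X1")
          case True then show False using nc1 c uL by blast
        next
          case False then show False using nc2 c uL v by blast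
        qed
      qed
    qed
  qed
  then have W: "cfg (X1 \<union> Xs)" using U X1c Lc by simp
  have "x \<in> Xs" using xf xE L_def Xs_def fut_mem by auto
  then show ?thesis using core[OF gd fin dis W] by blast
qed

lemma tot: "x \<in> future C E G X1 \<Longrightarrow> \<exists>y. R3 x y"
proof -
  assume xf: "x \<in> future C E G X1"
  have X1c: "configuration C E G X1" using gd good_def by auto
  have "x \<in> C \<union> E" using xf fut_mem by blast
  then show ?thesis
  proof
    assume xE: "x \<in> E" then show ?thesis using tot_ev xf by blast
  next
    assume xC: "x \<in> C"
    show ?thesis
    proof (cases "\<exists>w. (w, x) \<in> G \<and> w \<notin> X1")
      case False
      then have "x \<in> cut C G X1" using fut_cond_cut[OF X1c xf xC] by blast
      then show ?thesis using Rel.r1 by blast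
    next
      case True
      then obtain w where w: "(w, x) \<in> G" "w \<notin> X1" by blast
      then have wf: "w \<in> future C E G X1" using fut_pre_ev[OF X1c xf xC] by blast
      have wE: "w \<in> E" using G_C2 w xC by blast
      obtain w' where ww: "R3 w w'" using tot_ev wf wE by blast
      have w'E: "w' \<in> E" and hw: "h w = h w'" using R_props[OF gd ww] wE by auto
      have "x \<in> post w" using w by (simp add: postset_def)
      then have "h x \<in> postset F (h w')" using bij_post[OF wE] hw bij_betwE by metis
      then have "h x \<in> h ` post w'" using bij_post[OF w'E] unfolding bij_betw_def by simp
      then obtain b' where b': "h x = h b'" "b' \<in> post w'" by (rule imageE)
      show ?thesis using Rel.r3[OF ww wE \<open>x \<in> post w\<close> b'(2) b'(1)] by blast
    qed
  qed
qed

lemma II_eq: "R3 x y \<Longrightarrow> II x = y" using Iso_eq[OF gd] by blast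

lemma II_R: "x \<in> future C E G X1 \<Longrightarrow> R3 x (II x)"
  using tot II_eq by metis

end
end


context unf begin

context
  fixes X1 X2 :: "'n set" and \<sigma> :: "'n \<Rightarrow> 'n"
  assumes gd: "good X1 X2 \<sigma>"
begin

abbreviation R4 where "R4 \<equiv> Rel X1 X2 \<sigma>"
abbreviation I4 where "I4 \<equiv> Iso X1 X2 \<sigma>"

lemma X1c4: "configuration C E G X1" and X2c4: "configuration C E G X2" using gd good_def by auto

lemma surj4: "y \<in> future C E G X2 \<Longrightarrow> \<exists>x. R4 x y"
proof -
  assume y: "y \<in> future C E G X2"
  obtain x where "Rel X2 X1 (the_inv_into (cut C G X1) \<sigma>) y x" using tot[OF good_swap[OF gd] y] by blast
  then show ?thesis using Rel_swap_back[OF gd] by blast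
qed

lemma iso4: "future_iso C E G h X1 X2 I4"
proof -
  have Rx: "R4 x (I4 x)" if "x \<in> future C E G X1" for x using II_R[OF gd that] .
  have P1: "bij_betw I4 (future C E G X1) (future C E G X2)"
    unfolding bij_betw_def
  proof
    show "inj_on I4 (future C E G X1)"
    proof (rule inj_onI)
      fix x y assume xy: "x \<in> future C E G X1" "y \<in> future C E G X1" "I4 x = I4 y"
      have a: "R4 x (I4 x)" using Rx xy(1) by blast
      have "R4 y (I4 y)" using Rx xy(2) by blast
      then have b: "R4 y (I4 x)" using xy(3) by simp
      from a b show "x = y" using R_inj[OF gd] by blast
    qed
    show "I4 ` future C E G X1 = future C E G X2"
    proof
      show "I4 ` future C E G X1 \<subseteq> future C E G X2" using Rx R_props[OF gd] by blast
      show "future C E G X2 \<subseteq> I4 ` future C E G X1"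
      proof
        fix y assume y: "y \<in> future C E G X2"
        then obtain x where r: "R4 x y" using surj4 by blast
        then have "x \<in> future C E G X1" "I4 x = y" using R_props[OF gd r] II_eq[OF gd r] by auto
        then show "y \<in> I4 ` future C E G X1" by (metis imageI)
      qed
    qed
  qed
  have P2: "\<forall>x\<in>future C E G X1. (x \<in> E \<longleftrightarrow> I4 x \<in> E) \<and> h (I4 x) = h x"
    using R_props[OF gd Rx] by auto
  have P3: "(x, y) \<in> G \<longleftrightarrow> (I4 x, I4 y) \<in> G" if x: "x \<in> future C E G X1" and y: "y \<in> future C E G X1" for x y
  proof -
  have rx: "R4 x (I4 x)" and ry: "R4 y (I4 y)" using Rx x y by auto
  note px = R_props[OF gd rx] and py = R_props[OF gd ry]
  show "((x, y) \<in> G) = ((I4 x, I4 y) \<in> G)"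
  proof
    assume xy: "(x, y) \<in> G"
    from G_cases[OF xy] show "(I4 x, I4 y) \<in> G"
    proof
      assume k: "x \<in> C \<and> y \<in> E"
      then have "\<forall>b\<in>pre y. \<exists>b'\<in>pre (I4 y). R4 b b'" using R_ev_inv[OF gd ry] by blast
      moreover have "x \<in> pre y" using xy by (simp add: preset_def)
      ultimately obtain b' where "b' \<in> pre (I4 y)" "R4 x b'" by blast
      then have "I4 x \<in> pre (I4 y)" using II_eq[OF gd] by metis
      then show ?thesis by (simp add: preset_def)
    next
      assume k: "x \<in> E \<and> y \<in> C"
      have yC: "y \<in> C" using k by blast
      from R_cond_inv[OF gd ry yC] show ?thesis
      proof (elim disjE conjE exE)
        assume "y \<in> cut C G X1"
        then have "x \<notin> future C E G X1" using cut_pre_notfut[OF X1c4] xy by blast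
        then show ?thesis using x by blast
      next
        fix e e' assume r: "R4 e e'" "e \<in> E" "y \<in> post e" "I4 y \<in> post e'" "h y = h (I4 y)"
        have "(e, y) \<in> G" using r(3) by (simp add: postset_def)
        then have "e = x" using uniq_pre[of y e x] k xy by blast
        then have "e' = I4 x" using II_eq[OF gd r(1)] by simp
        then show ?thesis using r(4) by (simp add: postset_def)
      qed
    qed
  next
    assume xy: "(I4 x, I4 y) \<in> G"
    from G_cases[OF xy] show "(x, y) \<in> G"
    proof
      assume k: "I4 x \<in> C \<and> I4 y \<in> E"
      then have yE: "y \<in> E" using py by blast
      then have "\<forall>b'\<in>pre (I4 y). \<exists>b\<in>pre y. R4 b b'" using R_ev_inv[OF gd ry] by blast
      moreover have "I4 x \<in> pre (I4 y)" using xy by (simp add: preset_def)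
      ultimately obtain b where b: "b \<in> pre y" "R4 b (I4 x)" by blast
      then have "b = x" using R_inj[OF gd b(2) rx] by blast
      then show ?thesis using b by (simp add: preset_def)
    next
      assume k: "I4 x \<in> E \<and> I4 y \<in> C"
      then have yC: "y \<in> C" using py by blast
      from R_cond_inv[OF gd ry yC] show ?thesis
      proof (elim disjE conjE exE)
        assume a: "y \<in> cut C G X1" "I4 y = \<sigma> y"
        then have "I4 y \<in> cut C G X2" using gd good_def bij_betwE by metis
        moreover have "I4 x \<in> future C E G X2" using px by blast
        ultimately show ?thesis using cut_pre_notfut[OF X2c4] xy by blast
      next
        fix e e' assume r: "R4 e e'" "e \<in> E" "y \<in> post e" "I4 y \<in> post e'" "h y = h (I4 y)"
        have "(e', I4 y) \<in> G" using r(4) by (simp add: postset_def)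
        then have "e' = I4 x" using uniq_pre[of "I4 y" e' "I4 x"] k xy by blast
        then have "e = x" using R_inj[OF gd r(1)] rx by simp
        then show ?thesis using r(3) by (simp add: postset_def)
      qed
    qed
  qed
  qed
  show ?thesis unfolding future_iso_def using P1 P2 P3 by blast
qed

lemma iso_ext4:
  assumes fin: "finite Xs" and dis: "Xs \<inter> X1 = {}" and W: "cfg (X1 \<union> Xs)"
  shows "cfg (X2 \<union> I4 ` Xs) \<and> I4 ` Xs \<inter> X2 = {} \<and> mark C G h (X1 \<union> Xs) = mark C G h (X2 \<union> I4 ` Xs)"
proof -
  note c = core[OF gd fin dis W]
  have img: "I4 ` Xs = {y. \<exists>x\<in>Xs. R4 x y}"
  proof
    show "I4 ` Xs \<subseteq> {y. \<exists>x\<in>Xs. R4 x y}"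
    proof
      fix y assume "y \<in> I4 ` Xs"
      then obtain x where x: "x \<in> Xs" "y = I4 x" by blast
      have ct: "\<forall>x\<in>Xs. \<exists>y. R4 x y" using c by (rule conjunct1)
      then obtain z where z: "R4 x z" using x(1) by blast
      then have "y = z" using x(2) II_eq[OF gd z] by simp
      then show "y \<in> {y. \<exists>x\<in>Xs. R4 x y}" using x(1) z by blast
    qed
    show "{y. \<exists>x\<in>Xs. R4 x y} \<subseteq> I4 ` Xs"
    proof
      fix y assume "y \<in> {y. \<exists>x\<in>Xs. R4 x y}"
      then obtain x where x: "x \<in> Xs" "R4 x y" by blast
      then have "I4 x = y" using II_eq[OF gd] by blast
      then show "y \<in> I4 ` Xs" using x by blast
    qed
  qed
  note cs = c[folded img]
  have cf: "cfg (X2 \<union> I4 ` Xs)" using cs[THEN conjunct2, THEN conjunct1] .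
  have dj: "I4 ` Xs \<inter> X2 = {}" using cs[THEN conjunct2, THEN conjunct2, THEN conjunct1] .
  have c1: "\<forall>b\<in>cut C G (X1 \<union> Xs). \<exists>b'\<in>cut C G (X2 \<union> I4 ` Xs). R4 b b'"
    using cs[THEN conjunct2, THEN conjunct2, THEN conjunct2, THEN conjunct1] .
  have c2: "\<forall>b'\<in>cut C G (X2 \<union> I4 ` Xs). \<exists>b\<in>cut C G (X1 \<union> Xs). R4 b b'"
    using cs[THEN conjunct2, THEN conjunct2, THEN conjunct2, THEN conjunct2] .
  have mk: "mark C G h (X1 \<union> Xs) p = mark C G h (X2 \<union> I4 ` Xs) p" for p
  proof -
    let ?A = "{c \<in> cut C G (X1 \<union> Xs). h c = p}" and ?B = "{c \<in> cut C G (X2 \<union> I4 ` Xs). h c = p}"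
    have "bij_betw I4 ?A ?B"
      unfolding bij_betw_def
    proof
      show "inj_on I4 ?A"
      proof (rule inj_onI)
        fix x y assume xy: "x \<in> ?A" "y \<in> ?A" "I4 x = I4 y"
        obtain x' where x': "R4 x x'" using c1 xy by blast
        obtain y' where y': "R4 y y'" using c1 xy by blast
        have "I4 x = x'" "I4 y = y'" using II_eq[OF gd] x' y' by auto
        then have "R4 y x'" using y' xy(3) by simp
        then show "x = y" using R_inj[OF gd x'] by blast
      qed
      show "I4 ` ?A = ?B"
      proof
        show "I4 ` ?A \<subseteq> ?B"
        proof
          fix y assume "y \<in> I4 ` ?A"
          then obtain x where x: "x \<in> ?A" "y = I4 x" by blast
          then obtain x' where x': "x' \<in> cut C G (X2 \<union> I4 ` Xs)" "R4 x x'" using c1 by blast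
          then have "y = x'" "h x' = h x" using x II_eq[OF gd] R_props[OF gd x'(2)] by auto
          then show "y \<in> ?B" using x x' by simp
        qed
        show "?B \<subseteq> I4 ` ?A"
        proof
          fix y assume y: "y \<in> ?B"
          then obtain x where x: "x \<in> cut C G (X1 \<union> Xs)" "R4 x y" using c2 by blast
          then have "I4 x = y" "h x = h y" using II_eq[OF gd] R_props[OF gd x(2)] by auto
          then show "y \<in> I4 ` ?A" using x y by force
        qed
      qed
    qed
    then show ?thesis unfolding mark_def using bij_betw_same_card by blast
  qed
  show ?thesis using cf dj mk by blast
qed

end
end


context unf begin

lemma lc_sub: "cfg Z \<Longrightarrow> e \<in> Z \<Longrightarrow> local_config E G e \<subseteq> Z"
  unfolding local_config_def using cfg_closed by blast

lemma Xs_fut: "cfg Z \<Longrightarrow> L \<subseteq> Z \<Longrightarrow> configuration C E G L \<Longrightarrow> x \<in> Z - L \<Longrightarrow> x \<in> future C E G L"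
proof -
  assume Z: "cfg Z" and L: "L \<subseteq> Z" "configuration C E G L" and x: "x \<in> Z - L"
  have xE: "x \<in> E" using Z x cfg_sub by blast
  have "(x, e) \<notin> G" if "e \<in> L" for e using G_E2 xE CE_disj that L cfg_sub by blast
  moreover have "\<not> conflict C G x e" if "e \<in> L" for e using cfg_nc Z x L that by blast
  ultimately show ?thesis unfolding fut_mem using xE x by blast
qed

lemma complete:
  assumes ad: "adequate_order C E G h lt" and M: "M \<in> reach T F M0"
  shows "\<exists>X. cfg X \<and> mark C G h X = M \<and> (\<forall>e\<in>X. \<not> cutoff C E G h lt e)"
proof -
  have wf: "wfp (\<lambda>X Y. cfg X \<and> cfg Y \<and> lt X Y)"
    using ad unfolding adequate_order_def Let_def by blast
  have ext5: "\<forall>X1 X2 I Ex. cfg X1 \<and> cfg X2 \<and> lt X1 X2 \<and> mark C G h X1 = mark C G h X2 \<and>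
          future_iso C E G h X1 X2 I \<and> Ex \<inter> X1 = {} \<and> cfg (X1 \<union> Ex) \<longrightarrow>
          lt (X1 \<union> Ex) (X2 \<union> I ` Ex)"
    using ad unfolding adequate_order_def Let_def by blast
  define Q where "Q = {X. cfg X \<and> mark C G h X = M}"
  obtain X where "X \<in> Q" using reach_cfg[OF M] Q_def by blast
  then obtain Z where Z: "Z \<in> Q" "\<forall>Y. cfg Y \<and> cfg Z \<and> lt Y Z \<longrightarrow> Y \<notin> Q"
    using wf unfolding wfp_eq_minimal by blast
  have Zc: "cfg Z" "mark C G h Z = M" using Z Q_def by auto
  have "\<forall>e\<in>Z. \<not> cutoff C E G h lt e"
  proof (intro ballI notI)
    fix e assume eZ: "e \<in> Z" and co: "cutoff C E G h lt e"
    then obtain e' where e': "e \<in> E" "e' \<in> E" "mark C G h (local_config E G e') = mark C G h (local_config E G e)"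
      "lt (local_config E G e') (local_config E G e)" unfolding cutoff_def by blast
    define L where "L = local_config E G e"
    define L' where "L' = local_config E G e'"
    have Lc: "cfg L" using lc_cfg[of e] e'(1) unfolding L_def local_config_def by blast
    have L'c: "cfg L'" using lc_cfg[of e'] e'(2) unfolding L'_def local_config_def by blast
    have LZ: "L \<subseteq> Z" using lc_sub Zc eZ L_def by blast
    obtain \<sigma> where gd: "good L L' \<sigma>" using exists_sigma[OF Lc L'c] e'(3) L_def L'_def by metis
    define Xs where "Xs = Z - L"
    have fin: "finite Xs" using Zc Xs_def by simp
    have dis: "Xs \<inter> L = {}" using Xs_def by blast
    have U: "L \<union> Xs = Z" using LZ Xs_def by blast
    have W: "cfg (L \<union> Xs)" using U Zc by simp
    note ie = iso_ext4[OF gd fin dis W]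
    define Y where "Y = L' \<union> Iso L L' \<sigma> ` Xs"
    have Yc: "cfg Y" "mark C G h Y = M" using ie Y_def U Zc by auto
    define \<tau> where "\<tau> = the_inv_into (cut C G L) \<sigma>"
    have gd2: "good L' L \<tau>" using good_swap[OF gd] \<tau>_def by simp
    have fi: "future_iso C E G h L' L (Iso L' L \<tau>)" using iso4[OF gd2] .
    have bk: "Iso L' L \<tau> ` (Iso L L' \<sigma> ` Xs) = Xs"
    proof -
      have "Iso L' L \<tau> (Iso L L' \<sigma> x) = x" if x: "x \<in> Xs" for x
      proof -
        have "x \<in> future C E G L" using Xs_fut[OF Zc(1) LZ] Lc x Xs_def by blast
        then have "Rel L L' \<sigma> x (Iso L L' \<sigma> x)" using II_R[OF gd] by blast
        then have "Rel L' L \<tau> (Iso L L' \<sigma> x) x" using Rel_swap[OF _ gd] \<tau>_def by blast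
        then show ?thesis using Iso_eq[OF gd2] by blast
      qed
      then show ?thesis by force
    qed
    have "lt (L' \<union> Iso L L' \<sigma> ` Xs) (L \<union> Iso L' L \<tau> ` (Iso L L' \<sigma> ` Xs))"
      using ext5 L'c Lc e'(3) e'(4) fi ie L_def L'_def by blast
    then have "lt Y Z" using bk U Y_def by simp
    then have "Y \<notin> Q" using Z Yc Zc by blast
    then show False using Yc Q_def by blast
  qed
  then show ?thesis using Zc by blast
qed

end


context unf begin

definition Ep where "Ep lt = {e \<in> E. \<not> (\<exists>e'. cutoff C E G h lt e' \<and> (e', e) \<in> G\<^sup>+)}"
definition Cp where "Cp lt = {c \<in> C. \<forall>e. (e, c) \<in> G \<longrightarrow> e \<in> Ep lt}"
definition Gp where "Gp lt = G \<inter> ((Cp lt \<union> Ep lt) \<times> (Cp lt \<union> Ep lt))"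

lemma Ep_sub: "Ep lt \<subseteq> E" unfolding Ep_def by blast
lemma Cp_sub: "Cp lt \<subseteq> C" unfolding Cp_def by blast
lemma Gp_sub: "Gp lt \<subseteq> G" unfolding Gp_def by blast

lemma P1: "(x, y) \<in> G \<Longrightarrow> y \<in> Cp lt \<union> Ep lt \<Longrightarrow> x \<in> Cp lt \<union> Ep lt"
proof -
  assume xy: "(x, y) \<in> G" and y: "y \<in> Cp lt \<union> Ep lt"
  show ?thesis
  proof (cases "y \<in> Ep lt")
    case True
    then have yE: "y \<in> E" using Ep_sub by blast
    then have xC: "x \<in> C" using G_E2 xy by blast
    have "e \<in> Ep lt" if "(e, x) \<in> G" for e
    proof -
      have eE: "e \<in> E" using G_C2 that xC by blast
      have ey: "(e, y) \<in> G\<^sup>+" using that xy by auto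
      have "\<not> (cutoff C E G h lt e' \<and> (e', e) \<in> G\<^sup>+)" for e'
      proof
        assume a: "cutoff C E G h lt e' \<and> (e', e) \<in> G\<^sup>+"
        then have "(e', y) \<in> G\<^sup>+" using ey by (meson trancl_trans)
        then show False using a True unfolding Ep_def by blast
      qed
      then show ?thesis using eE unfolding Ep_def by blast
    qed
    then show ?thesis using xC unfolding Cp_def by blast
  next
    case False
    then have "y \<in> Cp lt" using y by blast
    then show ?thesis using xy unfolding Cp_def by blast
  qed
qed

lemma P2: "(x, y) \<in> G\<^sup>* \<Longrightarrow> y \<in> Cp lt \<union> Ep lt \<Longrightarrow> x \<in> Cp lt \<union> Ep lt \<and> (x, y) \<in> (Gp lt)\<^sup>*"
proof (induction rule: converse_rtrancl_induct)
  case base then show ?case by simp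
next
  case (step x z)
  then have z: "z \<in> Cp lt \<union> Ep lt" "(z, y) \<in> (Gp lt)\<^sup>*" by auto
  have x: "x \<in> Cp lt \<union> Ep lt" using P1 step.hyps(1) z(1) by blast
  have "(x, z) \<in> Gp lt" using step.hyps(1) x z(1) unfolding Gp_def by blast
  then show ?case using x z(2) by (meson converse_rtrancl_into_rtrancl)
qed

lemma P3: "x \<in> Cp lt \<union> Ep lt \<Longrightarrow> y \<in> Cp lt \<union> Ep lt \<Longrightarrow> (x, y) \<in> (Gp lt)\<^sup>+ \<longleftrightarrow> (x, y) \<in> G\<^sup>+"
proof
  assume "(x, y) \<in> (Gp lt)\<^sup>+"
  then show "(x, y) \<in> G\<^sup>+" using trancl_mono Gp_sub by blast
next
  assume x: "x \<in> Cp lt \<union> Ep lt" and y: "y \<in> Cp lt \<union> Ep lt" and "(x, y) \<in> G\<^sup>+"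
  then obtain z where z: "(x, z) \<in> G" "(z, y) \<in> G\<^sup>*" by (meson tranclD)
  then have "z \<in> Cp lt \<union> Ep lt" "(z, y) \<in> (Gp lt)\<^sup>*" using P2 y by blast+
  moreover have "(x, z) \<in> Gp lt" using z x calculation unfolding Gp_def by blast
  ultimately show "(x, y) \<in> (Gp lt)\<^sup>+" by (meson rtrancl_into_trancl2)
qed

lemma P4: "x \<in> Cp lt \<union> Ep lt \<Longrightarrow> y \<in> Cp lt \<union> Ep lt \<Longrightarrow> conflict (Cp lt) (Gp lt) x y \<longleftrightarrow> conflict C G x y"
proof
  assume "conflict (Cp lt) (Gp lt) x y"
  then obtain s u1 u2 where s: "s \<in> Cp lt" "u1 \<noteq> u2" "(s, u1) \<in> Gp lt" "(s, u2) \<in> Gp lt" "(u1, x) \<in> (Gp lt)\<^sup>*" "(u2, y) \<in> (Gp lt)\<^sup>*"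
    unfolding conflict_def by blast
  have "(u1, x) \<in> G\<^sup>*" "(u2, y) \<in> G\<^sup>*" using s rtrancl_mono Gp_sub by blast+
  then show "conflict C G x y" unfolding conflict_def using s Cp_sub Gp_sub by blast
next
  assume x: "x \<in> Cp lt \<union> Ep lt" and y: "y \<in> Cp lt \<union> Ep lt" and "conflict C G x y"
  then obtain s u1 u2 where s: "s \<in> C" "u1 \<noteq> u2" "(s, u1) \<in> G" "(s, u2) \<in> G" "(u1, x) \<in> G\<^sup>*" "(u2, y) \<in> G\<^sup>*"
    unfolding conflict_def by blast
  have u1: "u1 \<in> Cp lt \<union> Ep lt" "(u1, x) \<in> (Gp lt)\<^sup>*" using P2 s(5) x by blast+
  have u2: "u2 \<in> Cp lt \<union> Ep lt" "(u2, y) \<in> (Gp lt)\<^sup>*" using P2 s(6) y by blast+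
  have sN: "s \<in> Cp lt \<union> Ep lt" using P1 s(3) u1(1) by blast
  have sC: "s \<in> Cp lt" using sN s(1) Ep_sub CE_disj by blast
  have "(s, u1) \<in> Gp lt" "(s, u2) \<in> Gp lt" using s sN u1 u2 unfolding Gp_def by blast+
  then show "conflict (Cp lt) (Gp lt) x y" unfolding conflict_def using sC s(2) u1 u2 by blast
qed

lemma P5: "x \<in> Cp lt \<union> Ep lt \<Longrightarrow> y \<in> Cp lt \<union> Ep lt \<Longrightarrow> co (Cp lt) (Gp lt) x y \<longleftrightarrow> co C G x y"
  unfolding co_def using P3 P4 by metis

lemma P6: "X \<subseteq> Cp lt \<union> Ep lt \<Longrightarrow> coset (Cp lt) (Gp lt) X \<longleftrightarrow> coset C G X"
  unfolding coset_def using P5 by (metis subsetD)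

lemma P7: "e \<in> Ep lt \<Longrightarrow> postset (Gp lt) e = post e"
proof
  show "postset (Gp lt) e \<subseteq> post e" using Gp_sub unfolding postset_def by blast
  assume e: "e \<in> Ep lt"
  show "post e \<subseteq> postset (Gp lt) e"
  proof
    fix b assume b: "b \<in> post e"
    have "b \<in> C" using post_C b e Ep_sub by blast
    moreover have "\<forall>w. (w, b) \<in> G \<longrightarrow> w \<in> Ep lt"
      using uniq_pre calculation b e unfolding postset_def by blast
    ultimately have "b \<in> Cp lt" unfolding Cp_def by blast
    then show "b \<in> postset (Gp lt) e" using b e unfolding Gp_def postset_def by blast
  qed
qed

end


context unf begin

lemma mark_pos: "cfg W \<Longrightarrow> c \<in> cut C G W \<Longrightarrow> 0 < mark C G h W (h c)"
proof -
  assume W: "cfg W" and c: "c \<in> cut C G W"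
  have "c \<in> {c' \<in> cut C G W. h c' = h c}" using c by blast
  moreover have "finite {c' \<in> cut C G W. h c' = h c}" using cut_fin W by simp
  ultimately show ?thesis unfolding mark_def using card_gt_0_iff by blast
qed

lemma enabled_ev: "cfg Y \<Longrightarrow> e \<in> E \<Longrightarrow> pre e \<subseteq> cut C G Y \<Longrightarrow> enabled F (mark C G h Y) (h e)"
  unfolding enabled_def
proof
  fix p assume Y: "cfg Y" and eE: "e \<in> E" and pe: "pre e \<subseteq> cut C G Y" and p: "p \<in> preset F (h e)"
  have "p \<in> h ` pre e" using p bij_pre[OF eE] unfolding bij_betw_def by simp
  then obtain c where c: "c \<in> pre e" "p = h c" by blast
  then show "0 < mark C G h Y p" using mark_pos[OF Y] pe by blast
qed

lemma en_cover: "enabled F (mark C G h W) t \<Longrightarrow> p \<in> preset F t \<Longrightarrow> \<exists>c\<in>cut C G W. h c = p"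
proof -
  assume en: "enabled F (mark C G h W) t" and p: "p \<in> preset F t"
  then have "0 < card {c \<in> cut C G W. h c = p}" unfolding enabled_def mark_def by blast
  then have "{c \<in> cut C G W. h c = p} \<noteq> {}" by (metis card.empty less_irrefl)
  then show ?thesis by blast
qed

lemma en_ext: "cfg W \<Longrightarrow> t \<in> T \<Longrightarrow> enabled F (mark C G h W) t \<Longrightarrow> \<exists>e\<in>E. pre e \<subseteq> cut C G W \<and> h e = t"
proof -
  assume W: "cfg W" and tT: "t \<in> T" and en: "enabled F (mark C G h W) t"
  define g where "g p = (SOME c. c \<in> cut C G W \<and> h c = p)" for p
  have g: "g p \<in> cut C G W \<and> h (g p) = p" if "p \<in> preset F t" for p
  proof -
    have "\<exists>c. c \<in> cut C G W \<and> h c = p" using en_cover[OF en that] by blast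
    then show ?thesis unfolding g_def by (rule someI_ex)
  qed
  define B where "B = g ` preset F t"
  have Bcut: "B \<subseteq> cut C G W" using g B_def by blast
  have Bbij: "bij_betw h B (preset F t)"
    unfolding bij_betw_def
  proof
    show "inj_on h B" unfolding B_def inj_on_def using g by auto
    show "h ` B = preset F t"
    proof
      show "h ` B \<subseteq> preset F t" unfolding B_def using g by auto
      show "preset F t \<subseteq> h ` B"
      proof
        fix p assume "p \<in> preset F t"
        then have "h (g p) = p" "g p \<in> B" using g B_def by auto
        then show "p \<in> h ` B" by (metis imageI)
      qed
    qed
  qed
  have BC: "B \<subseteq> C" using Bcut cut_sub cfg_sub W by blast
  have Bco: "coset C G B" using coset_subset cut_coset W Bcut by blast
  obtain e where e: "e \<in> E" "pre e = B" "h e = t" using ext[OF BC Bco tT Bbij] by blast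
  then show ?thesis using Bcut by blast
qed

lemma fwd:
  assumes t1: "t1 \<in> T" and t2: "t2 \<in> T" and e1p: "e1 \<in> Ep lt" and he: "h e1 = t1"
    and X': "X' \<in> cuts_of (Cp lt) (Gp lt) (B_prec F (Cp lt) (Gp lt) h e1 t2)"
    and cov: "preset F t2 \<subseteq> h ` X'"
  shows "tar T F M0 t1 t2"
proof -
  let ?N = "Cp lt \<union> Ep lt"
  have e1: "e1 \<in> E" using e1p Ep_sub by blast
  have X'B: "X' \<subseteq> B_prec F (Cp lt) (Gp lt) h e1 t2" and X'co: "coset (Cp lt) (Gp lt) X'"
    using X' unfolding cuts_of_def by auto
  have BN: "B_prec F (Cp lt) (Gp lt) h e1 t2 \<subseteq> Cp lt"
  proof
    fix b assume b: "b \<in> B_prec F (Cp lt) (Gp lt) h e1 t2"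
    show "b \<in> Cp lt"
    proof (cases "b \<in> postset (Gp lt) e1")
      case True
      then have "b \<in> ?N" "b \<in> C" using e1 post_C P7[OF e1p] unfolding Gp_def postset_def by blast+
      then show ?thesis using Ep_sub CE_disj by blast
    next
      case False
      then show ?thesis using b unfolding B_prec_def by blast
    qed
  qed
  define d where "d p = (SOME c. c \<in> X' \<and> h c = p)" for p
  have d: "d p \<in> X' \<and> h (d p) = p" if "p \<in> preset F t2" for p
  proof -
    have "\<exists>c. c \<in> X' \<and> h c = p" using cov that by blast
    then show ?thesis unfolding d_def by (rule someI_ex)
  qed
  define D where "D = d ` preset F t2"
  have Dfin: "finite D" using preF_fin[OF t2] D_def by simp
  have DX: "D \<subseteq> X'" using d D_def by blast
  have DCp: "D \<subseteq> Cp lt" using DX X'B BN by blast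
  have DC: "D \<subseteq> C" using DCp Cp_sub by blast
  have "coset (Cp lt) (Gp lt) D" using X'co DX unfolding coset_def by blast
  then have Dco: "coset C G D" using P6[of D lt] DCp by blast
  have Dcase: "d' \<in> post e1 \<or> co C G d' e1" if "d' \<in> D" for d'
  proof -
    have "d' \<in> B_prec F (Cp lt) (Gp lt) h e1 t2" using that DX X'B by blast
    then have "d' \<in> postset (Gp lt) e1 \<or> co (Cp lt) (Gp lt) d' e1" unfolding B_prec_def by blast
    then show ?thesis using P7[OF e1p] P5[of d' lt e1] that DCp e1p by blast
  qed
  have acyc': "(x, x) \<notin> G\<^sup>+" for x using acyc .
  have nc_top: "\<not> conflict C G y y'" if y: "y \<in> insert e1 D" and y': "y' \<in> insert e1 D" for y y'
  proof
    assume c: "conflict C G y y'"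
    have ed: False if "conflict C G e1 d'" "d' \<in> D" for d'
    proof -
      from Dcase[OF that(2)] show False
      proof
        assume "d' \<in> post e1"
        then have ed: "(e1, d') \<in> G" by (simp add: postset_def)
        have "conflict C G d' e1" using conflict_sym[OF that(1)] .
        then have "conflict C G e1 e1" using conflict_cond_pre[of d' e1 e1] ed DC that(2) by blast
        then show False using no_self_conf e1 by blast
      next
        assume "co C G d' e1" then show False using that(1) conflict_sym[of C G e1 d'] unfolding co_def by blast
      qed
    qed
    show False
    proof (cases "y = y'")
      case True
      then have "y \<in> C \<union> E" using y e1 DC by blast
      then show False using c True no_self_conf by blast
    next
      case False
      show False
      proof (cases "y = e1")
        case True
        then have "y' \<in> D" using False y' by blast
        then show False using ed c True by blast
      next
        case yne: False
        then have yD: "y \<in> D" using y by blast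
        show False
        proof (cases "y' = e1")
          case True
          then have "conflict C G e1 y" using conflict_sym[OF c] by simp
          then show False using ed yD by blast
        next
          case False
          then have "y' \<in> D" using y' by blast
          then show False using Dco yD \<open>y \<noteq> y'\<close> c unfolding coset_def co_def by blast
        qed
      qed
    qed
  qed
  define W where "W = {u\<in>E. \<exists>y\<in>insert e1 D. (u, y) \<in> G\<^sup>*}"
  have Wfin: "finite W"
  proof -
    have "W \<subseteq> (\<Union>y\<in>insert e1 D. insert y {z. (z, y) \<in> G\<^sup>+})"
      unfolding W_def by (auto simp: rtrancl_eq_or_trancl)
    moreover have "finite (\<Union>y\<in>insert e1 D. insert y {z. (z, y) \<in> G\<^sup>+})"
      using Dfin fin_pred e1 DC by auto
    ultimately show ?thesis using finite_subset by blast
  qed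
  have Wc: "configuration C E G W"
    unfolding configuration_def
  proof (intro conjI ballI impI)
    show "W \<subseteq> E" unfolding W_def by blast
    fix x e' assume xe: "x \<in> W" "e' \<in> E" "(e', x) \<in> G\<^sup>+"
    then obtain y where y: "y \<in> insert e1 D" "(x, y) \<in> G\<^sup>*" unfolding W_def by blast
    have "(e', x) \<in> G\<^sup>*" using xe(3) by (rule trancl_into_rtrancl)
    then have "(e', y) \<in> G\<^sup>*" using y(2) by (rule rtrancl_trans)
    then show "e' \<in> W" using xe(2) y(1) unfolding W_def by blast
  next
    fix u v assume u: "u \<in> W" and v: "v \<in> W"
    then obtain y y' where yy: "y \<in> insert e1 D" "(u, y) \<in> G\<^sup>*" "y' \<in> insert e1 D" "(v, y') \<in> G\<^sup>*"
      unfolding W_def by blast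
    show "\<not> conflict C G u v"
    proof
      assume "conflict C G u v"
      then have "conflict C G y v" using conflict_mono_l[of C G u v y] yy by blast
      then have "conflict C G y y'" using conflict_mono_r[of C G y v y'] yy by blast
      then show False using nc_top yy by blast
    qed
  qed
  have W: "cfg W" using Wc Wfin by blast
  have e1W: "e1 \<in> W" unfolding W_def using e1 by blast
  have mx: "\<forall>u\<in>W. (e1, u) \<notin> G\<^sup>+"
  proof (intro ballI notI)
    fix u assume u: "u \<in> W" and eu: "(e1, u) \<in> G\<^sup>+"
    then obtain y where y: "y \<in> insert e1 D" "(u, y) \<in> G\<^sup>*" unfolding W_def by blast
    have ey: "(e1, y) \<in> G\<^sup>+" using eu y(2) by auto
    show False
    proof (cases "y = e1")
      case True then show False using ey acyc by simp
    next
      case False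
      then have yD: "y \<in> D" using y by blast
      from Dcase[OF yD] show False
      proof
        assume yp: "y \<in> post e1"
        have uE: "u \<in> E" using u W_def by blast
        have yC: "y \<in> C" using yD DC by blast
        obtain w where w: "(w, y) \<in> G" "(u, w) \<in> G\<^sup>*" using ev_to_cond[OF y(2) uE yC] by blast
        have "(e1, y) \<in> G" using yp by (simp add: postset_def)
        then have "w = e1" using uniq_pre[OF yC] w by blast
        then have "(e1, e1) \<in> G\<^sup>+" using eu w(2) by auto
        then show False using acyc by blast
      next
        assume "co C G y e1" then show False using ey unfolding co_def by blast
      qed
    qed
  qed
  have DW: "D \<subseteq> cut C G W"
  proof
    fix c assume cD: "c \<in> D"
    have cC: "c \<in> C" using cD DC by blast
    have prod: "c \<in> min_conds C G \<or> (\<exists>w\<in>W. (w, c) \<in> G)"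
    proof (cases "\<exists>w. (w, c) \<in> G")
      case True
      then obtain w where w: "(w, c) \<in> G" by blast
      then have "w \<in> E" using G_C2 cC by blast
      then have "w \<in> W" unfolding W_def using w cD by blast
      then show ?thesis using w by blast
    next
      case False then show ?thesis using cC unfolding min_conds_mem by blast
    qed
    have "(c, u) \<notin> G" if u: "u \<in> W" for u
    proof
      assume cu: "(c, u) \<in> G"
      obtain y where y: "y \<in> insert e1 D" "(u, y) \<in> G\<^sup>*" using u unfolding W_def by blast
      have cy: "(c, y) \<in> G\<^sup>+" using cu y(2) by auto
      show False
      proof (cases "y = e1")
        case True
        from Dcase[OF cD] show False
        proof
          assume "c \<in> post e1"
          then have "(e1, c) \<in> G" by (simp add: postset_def)
          then have "(e1, e1) \<in> G\<^sup>+" using cy True by auto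
          then show False using acyc by blast
        next
          assume "co C G c e1" then show False using cy True unfolding co_def by blast
        qed
      next
        case False
        then have yD: "y \<in> D" using y by blast
        show False
        proof (cases "y = c")
          case True then show False using cy acyc by blast
        next
          case False then show False using Dco yD cD cy unfolding coset_def co_def by blast
        qed
      qed
    qed
    then show "c \<in> cut C G W" using prod unfolding cut_mem by blast
  qed
  note rm = remove_max[OF W e1W mx]
  have ins: "insert e1 (W - {e1}) = W" using e1W by blast
  have mW: "mark C G h W = fire F (mark C G h (W - {e1})) t1"
    using extend(5)[OF rm(1) e1 rm(2)] ins he by simp
  have r: "mark C G h (W - {e1}) \<in> reach T F M0" using cfg_reach rm(1) by blast
  have en1: "enabled F (mark C G h (W - {e1})) t1" using enabled_ev[OF rm(1) e1 rm(2)] he by simp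
  have en2: "enabled F (mark C G h W) t2"
    unfolding enabled_def
  proof
    fix p assume p: "p \<in> preset F t2"
    then have dp: "d p \<in> D" "h (d p) = p" using d D_def by auto
    have "0 < mark C G h W (h (d p))" using mark_pos[OF W] DW dp(1) by blast
    then show "0 < mark C G h W p" using dp(2) by simp
  qed
  have en2': "enabled F (fire F (mark C G h (W - {e1})) t1) t2" using en2 mW by simp
  show ?thesis unfolding tar_def using t1 t2 r en1 en2' by blast
qed

end


context unf begin

lemma bwd:
  assumes ad: "adequate_order C E G h lt" and t1: "t1 \<in> T" and t2: "t2 \<in> T" and tr: "tar T F M0 t1 t2"
  shows "check_by_cuts F (Cp lt) (Ep lt) (Gp lt) h t1 t2"
proof -
  obtain Ms where Ms: "Ms \<in> reach T F M0" "enabled F Ms t1" "enabled F (fire F Ms t1) t2"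
    using tr unfolding tar_def by blast
  obtain X0 where X0: "cfg X0" "mark C G h X0 = Ms" "\<forall>e\<in>X0. \<not> cutoff C E G h lt e"
    using complete[OF ad Ms(1)] by blast
  have X0c: "configuration C E G X0" using X0 by blast
  have "enabled F (mark C G h X0) t1" using Ms(2) X0(2) by simp
  then obtain e1 where e1: "e1 \<in> E" "pre e1 \<subseteq> cut C G X0" "h e1 = t1" using en_ext[OF X0(1) t1] by blast
  note x = extend[OF X0(1) e1(1) e1(2)]
  define W where "W = insert e1 X0"
  have W: "cfg W" using x(2) W_def by simp
  have Wc: "configuration C E G W" using W by blast
  have mW: "mark C G h W = fire F Ms t1" using x(5) W_def X0(2) e1(3) by simp
  have en2: "enabled F (mark C G h W) t2" using Ms(3) mW by simp
  have e1W: "e1 \<in> W" using W_def by blast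
  define D where "D = {c \<in> cut C G W. h c \<in> preset F t2}"
  have noc: "\<not> (cutoff C E G h lt e' \<and> (e', x) \<in> G\<^sup>+)" if "x \<in> W" for e' x
  proof
    assume a: "cutoff C E G h lt e' \<and> (e', x) \<in> G\<^sup>+"
    then have e'E: "e' \<in> E" unfolding cutoff_def by blast
    then have "e' \<in> W" using a Wc that unfolding configuration_def by blast
    moreover have "e' \<noteq> e1"
    proof
      assume "e' = e1"
      then have "(e1, x) \<in> G\<^sup>+" using a by simp
      then show False
      proof (cases "x = e1")
        case True then show False using \<open>(e1, x) \<in> G\<^sup>+\<close> acyc by simp
      next
        case False
        then have "x \<in> X0" using that W_def by blast
        then have "e1 \<in> X0" using \<open>(e1, x) \<in> G\<^sup>+\<close> X0c e1(1) unfolding configuration_def by blast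
        then show False using x(1) by blast
      qed
    qed
    ultimately have "e' \<in> X0" using W_def by blast
    then show False using X0(3) a by blast
  qed
  have WEp: "W \<subseteq> Ep lt"
  proof
    fix u assume u: "u \<in> W"
    then have "u \<in> E" using Wc cfg_sub by blast
    then show "u \<in> Ep lt" unfolding Ep_def using noc[OF u] by blast
  qed
  have e1p: "e1 \<in> Ep lt" using WEp e1W by blast
  have DCp: "D \<subseteq> Cp lt"
  proof
    fix c assume c: "c \<in> D"
    then have cW: "c \<in> cut C G W" using D_def by blast
    have "c \<in> C" using cW cut_sub cfg_sub Wc by blast
    moreover have "\<forall>e. (e, c) \<in> G \<longrightarrow> e \<in> Ep lt" using cut_pre[OF Wc cW] WEp by blast
    ultimately show "c \<in> Cp lt" unfolding Cp_def by blast
  qed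
  define Bp where "Bp = B_prec F (Cp lt) (Gp lt) h e1 t2"
  have DB: "D \<subseteq> Bp"
  proof
    fix c assume c: "c \<in> D"
    then have cW: "c \<in> cut C G W" and hc: "h c \<in> preset F t2" using D_def by auto
    have cC: "c \<in> C" using cW cut_sub cfg_sub Wc by blast
    show "c \<in> Bp"
    proof (cases "c \<in> post e1")
      case True
      then show ?thesis using P7[OF e1p] unfolding Bp_def B_prec_def by blast
    next
      case False
      have n1: "(c, e1) \<notin> G\<^sup>+" using cut_not_below[OF Wc cW e1W] .
      have n2: "(e1, c) \<notin> G\<^sup>+"
      proof
        assume "(e1, c) \<in> G\<^sup>+"
        then obtain w where w: "(e1, w) \<in> G\<^sup>*" "(w, c) \<in> G" by (meson tranclD2)
        have wW: "w \<in> W" using cut_pre[OF Wc cW w(2)] .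
        show False
        proof (cases "w = e1")
          case True then show False using False w(2) by (simp add: postset_def)
        next
          case wne: False
          then have "(e1, w) \<in> G\<^sup>+" using w(1) by (simp add: rtrancl_eq_or_trancl)
          moreover have "w \<in> X0" using wW wne W_def by blast
          ultimately have "e1 \<in> X0" using X0c e1(1) unfolding configuration_def by blast
          then show False using x(1) by blast
        qed
      qed
      have n3: "\<not> conflict C G c e1" using cut_noconf[OF Wc cW e1W] .
      have "co C G c e1" unfolding co_def using n1 n2 n3 by blast
      then have "co (Cp lt) (Gp lt) c e1" using P5[of c lt e1] c DCp e1p by blast
      then show ?thesis using c DCp hc unfolding Bp_def B_prec_def by blast
    qed
  qed
  have DW: "D \<subseteq> cut C G W" unfolding D_def by blast
  have "coset C G D" using coset_subset[OF cut_coset[OF Wc] DW] .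
  then have Dco: "coset (Cp lt) (Gp lt) D" using P6[of D lt] DCp by blast
  define \<A> where "\<A> = {Y. D \<subseteq> Y \<and> Y \<subseteq> Bp \<and> coset (Cp lt) (Gp lt) Y}"
  have AD: "Y \<in> \<A> \<longleftrightarrow> D \<subseteq> Y \<and> Y \<subseteq> Bp \<and> coset (Cp lt) (Gp lt) Y" for Y unfolding \<A>_def by simp
  have "D \<in> \<A>" unfolding AD using DB Dco by simp
  then have ne: "\<A> \<noteq> {}" by blast
  have ch: "\<Union>\<C> \<in> \<A>" if ch1: "\<C> \<noteq> {}" and ch2: "subset.chain \<A> \<C>" for \<C>
  proof -
    have sub: "\<C> \<subseteq> \<A>" and lin: "\<forall>X\<in>\<C>. \<forall>Y\<in>\<C>. X \<subseteq> Y \<or> Y \<subseteq> X" using ch2 unfolding subset_chain_def by auto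
    obtain X0 where "X0 \<in> \<C>" using ch1 by blast
    then have "D \<subseteq> X0" "X0 \<subseteq> \<Union>\<C>" using sub AD by auto
    then have c1: "D \<subseteq> \<Union>\<C>" by (rule subset_trans)
    have c2: "\<Union>\<C> \<subseteq> Bp"
    proof
      fix a assume "a \<in> \<Union>\<C>"
      then obtain Xa where "Xa \<in> \<C>" "a \<in> Xa" by blast
      then show "a \<in> Bp" using sub AD by blast
    qed
    have c3: "coset (Cp lt) (Gp lt) (\<Union>\<C>)"
      unfolding coset_def
    proof (intro ballI impI)
      fix a b assume a: "a \<in> \<Union>\<C>" and b: "b \<in> \<Union>\<C>" and ab: "a \<noteq> b"
      obtain Xa where Xa: "Xa \<in> \<C>" "a \<in> Xa" using a by blast
      obtain Xb where Xb: "Xb \<in> \<C>" "b \<in> Xb" using b by blast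
      have "\<exists>Z. Z \<in> \<C> \<and> a \<in> Z \<and> b \<in> Z"
      proof (cases "Xa \<subseteq> Xb")
        case True then show ?thesis using Xa Xb by blast
      next
        case False then have "Xb \<subseteq> Xa" using lin Xa Xb by blast
        then show ?thesis using Xa Xb by blast
      qed
      then obtain Z where Z: "Z \<in> \<C>" "a \<in> Z" "b \<in> Z" by blast
      then have "coset (Cp lt) (Gp lt) Z" using sub AD by blast
      then show "co (Cp lt) (Gp lt) a b" using Z ab unfolding coset_def by blast
    qed
    show ?thesis unfolding AD using c1 c2 c3 by blast
  qed
  obtain Mx where Mx: "Mx \<in> \<A>" "\<forall>X\<in>\<A>. Mx \<subseteq> X \<longrightarrow> X = Mx" using subset_Zorn_nonempty[OF ne ch] by blast
  have Mx1: "D \<subseteq> Mx" "Mx \<subseteq> Bp" "coset (Cp lt) (Gp lt) Mx" using Mx(1) AD by auto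
  have Mcut: "Mx \<in> cuts_of (Cp lt) (Gp lt) Bp"
    unfolding cuts_of_def
  proof (intro CollectI conjI allI impI)
    show "Mx \<subseteq> Bp" "coset (Cp lt) (Gp lt) Mx" using Mx1 by auto
    fix Y assume Y: "Mx \<subset> Y \<and> Y \<subseteq> Bp"
    show "\<not> coset (Cp lt) (Gp lt) Y"
    proof
      assume "coset (Cp lt) (Gp lt) Y"
      then have "Y \<in> \<A>" unfolding AD using Y Mx1 by blast
      then have "Y = Mx" using Mx(2) Y by blast
      then show False using Y by blast
    qed
  qed
  have cov: "preset F t2 \<subseteq> h ` Mx"
  proof
    fix p assume p: "p \<in> preset F t2"
    then obtain c where "c \<in> cut C G W" "h c = p" using en_cover[OF en2] by blast
    then have "c \<in> D" using p D_def by blast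
    then have "c \<in> Mx" using Mx1 by blast
    then show "p \<in> h ` Mx" using \<open>h c = p\<close> by blast
  qed
  show ?thesis unfolding check_by_cuts_def using e1p e1(3) Mcut cov Bp_def by blast
qed

end

theorem proposition3:
  fixes P T :: "'a set" and F :: "('a \<times> 'a) set" and M0 :: "'a \<Rightarrow> nat"
    and C E :: "'n set" and G :: "('n \<times> 'n) set" and h :: "'n \<Rightarrow> 'a"
  assumes "net_system P T F M0"
    and "complete_prefix P T F M0 C E G h"
    and "t1 \<in> T" and "t2 \<in> T"
  shows "check_by_cuts F C E G h t1 t2 \<longleftrightarrow> tar T F M0 t1 t2"
proof -
  obtain CU EU GU lt where u: "is_unfolding P T F M0 CU EU GU h" and ad: "adequate_order CU EU GU h lt"
    and Edef: "E = {e \<in> EU. \<not> (\<exists>e'. cutoff CU EU GU h lt e' \<and> (e', e) \<in> GU\<^sup>+)}"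
    and Cdef: "C = {c \<in> CU. \<forall>e. (e, c) \<in> GU \<longrightarrow> e \<in> E}"
    and Gdef: "G = GU \<inter> ((C \<union> E) \<times> (C \<union> E))"
    using assms(2) unfolding complete_prefix_def by blast
  interpret U: unf P T F M0 CU EU GU h using assms(1) u by unfold_locales
  have E': "E = U.Ep lt" using Edef U.Ep_def by simp
  have C': "C = U.Cp lt" using Cdef E' U.Cp_def by simp
  have G': "G = U.Gp lt" using Gdef E' C' U.Gp_def by simp
  show ?thesis
  proof
    assume "check_by_cuts F C E G h t1 t2"
    then obtain e1 X' where e1: "e1 \<in> U.Ep lt" "h e1 = t1"
      and X': "X' \<in> cuts_of (U.Cp lt) (U.Gp lt) (B_prec F (U.Cp lt) (U.Gp lt) h e1 t2)"
      and cov: "preset F t2 \<subseteq> h ` X'"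
      unfolding check_by_cuts_def E' C' G' by blast
    show "tar T F M0 t1 t2" using U.fwd[OF assms(3,4) e1 X' cov] .
  next
    assume "tar T F M0 t1 t2"
    then show "check_by_cuts F C E G h t1 t2" using U.bwd[OF ad assms(3,4)] E' C' G' by simp
  qed
qed


end
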